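(* Suppose that $(G,\mathcal P)$ is relatively hyperbolic, where $\mathcal P$ is a $C$-almost malnormal collection of slender subgroups. If $G$ admits a nontrivial splitting over a parabolic subgroup, then $G$ admits a nontrivial $(2,C)$-acylindrical splitting over a parabolic subgroup.
   Context: Relative hyperbolicity: $G$ finitely generated, $\mathcal P$ a finite collection of finitely generated subgroups, none equal to $G$, with $G$ hyperbolic relative to $\mathcal P$. Parabolic: conjugate into some $P\in\mathcal P$. Slender: every subgroup finitely generated. $\mathcal P$ is $C$-almost malnormal if whenever $P_1,P_2\in\mathcal P$, $g\in G$ and $\#(P_1\cap gP_2g^{-1})>C$, we have $P_1=P_2$ and $g\in P_1$. A splitting is nontrivial if its Bass–Serre tree action has no global fixed point. An action on a tree is $(k,C)$-acylindrical if the stabilizer of every segment of length at least $k+1$ has cardinality at most $C$. *)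

theory Defs
  imports "HOL-Algebra.Algebra"
begin

definition simple_graph :: "'v set \<Rightarrow> ('v \<Rightarrow> 'v \<Rightarrow> bool) \<Rightarrow> bool" where
  "simple_graph V Adj \<longleftrightarrow> (\<forall>u v. Adj u v \<longrightarrow> u \<in> V \<and> v \<in> V \<and> u \<noteq> v \<and> Adj v u)"

definition gwalk :: "('v \<Rightarrow> 'v \<Rightarrow> bool) \<Rightarrow> 'v list \<Rightarrow> bool" where
  "gwalk Adj xs \<longleftrightarrow> xs \<noteq> [] \<and> (\<forall>i. Suc i < length xs \<longrightarrow> Adj (xs ! i) (xs ! Suc i))"

definition graph_connected :: "'v set \<Rightarrow> ('v \<Rightarrow> 'v \<Rightarrow> bool) \<Rightarrow> bool" where
  "graph_connected V Adj \<longleftrightarrow>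
     (\<forall>u\<in>V. \<forall>v\<in>V. \<exists>xs. gwalk Adj xs \<and> hd xs = u \<and> last xs = v)"

definition gdist :: "('v \<Rightarrow> 'v \<Rightarrow> bool) \<Rightarrow> 'v \<Rightarrow> 'v \<Rightarrow> nat" where
  "gdist Adj u v = (LEAST n. \<exists>xs. gwalk Adj xs \<and> hd xs = u \<and> last xs = v \<and> length xs = Suc n)"

definition gromov_product :: "('v \<Rightarrow> 'v \<Rightarrow> bool) \<Rightarrow> 'v \<Rightarrow> 'v \<Rightarrow> 'v \<Rightarrow> real" where
  "gromov_product Adj x y w =
     (real (gdist Adj x w) + real (gdist Adj y w) - real (gdist Adj x y)) / 2"

text \<open>Gromov hyperbolicity of a connected graph (four-point condition on vertices).\<close>
definition hyperbolic_graph :: "'v set \<Rightarrow> ('v \<Rightarrow> 'v \<Rightarrow> bool) \<Rightarrow> bool" where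
  "hyperbolic_graph V Adj \<longleftrightarrow> graph_connected V Adj \<and>
     (\<exists>\<delta>::real. \<forall>x\<in>V. \<forall>y\<in>V. \<forall>z\<in>V. \<forall>w\<in>V.
        gromov_product Adj x y w \<ge> min (gromov_product Adj x z w) (gromov_product Adj y z w) - \<delta>)"

definition cycle_list :: "('v \<Rightarrow> 'v \<Rightarrow> bool) \<Rightarrow> 'v list \<Rightarrow> bool" where
  "cycle_list Adj c \<longleftrightarrow> length c \<ge> 3 \<and> distinct c \<and> gwalk Adj c \<and> Adj (last c) (hd c)"

text \<open>Fine (Bowditch): each edge lies in only finitely many circuits of each length n.
  Circuits through the edge uv correspond bijectively to cycle lists starting u, v.\<close>
definition fine_graph :: "'v set \<Rightarrow> ('v \<Rightarrow> 'v \<Rightarrow> bool) \<Rightarrow> bool" where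
  "fine_graph V Adj \<longleftrightarrow> (\<forall>u v. Adj u v \<longrightarrow>
     (\<forall>n. finite {c. cycle_list Adj c \<and> length c = n \<and> c ! 0 = u \<and> c ! 1 = v}))"

definition is_tree :: "'v set \<Rightarrow> ('v \<Rightarrow> 'v \<Rightarrow> bool) \<Rightarrow> bool" where
  "is_tree V Adj \<longleftrightarrow> simple_graph V Adj \<and> V \<noteq> {} \<and> graph_connected V Adj \<and>
     \<not> (\<exists>c. cycle_list Adj c)"

definition graph_action :: "('g, 'b) monoid_scheme \<Rightarrow> 'v set \<Rightarrow> ('v \<Rightarrow> 'v \<Rightarrow> bool) \<Rightarrow> ('g \<Rightarrow> 'v \<Rightarrow> 'v) \<Rightarrow> bool" where
  "graph_action G V Adj \<phi> \<longleftrightarrow> group_action G V \<phi> \<and>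
     (\<forall>g\<in>carrier G. \<forall>u v. Adj u v \<longrightarrow> Adj (\<phi> g u) (\<phi> g v))"

definition pstab :: "('g, 'b) monoid_scheme \<Rightarrow> ('g \<Rightarrow> 'v \<Rightarrow> 'v) \<Rightarrow> 'v set \<Rightarrow> 'g set" where
  "pstab G \<phi> S = {g \<in> carrier G. \<forall>x\<in>S. \<phi> g x = x}"

definition finitely_many_edge_orbits :: "('g, 'b) monoid_scheme \<Rightarrow> ('v \<Rightarrow> 'v \<Rightarrow> bool) \<Rightarrow> ('g \<Rightarrow> 'v \<Rightarrow> 'v) \<Rightarrow> bool" where
  "finitely_many_edge_orbits G Adj \<phi> \<longleftrightarrow> (\<exists>F. finite F \<and>
     (\<forall>u v. Adj u v \<longrightarrow> (\<exists>(a, b)\<in>F. \<exists>g\<in>carrier G. \<phi> g a = u \<and> \<phi> g b = v)))"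

definition without_inversions :: "('g, 'b) monoid_scheme \<Rightarrow> ('v \<Rightarrow> 'v \<Rightarrow> bool) \<Rightarrow> ('g \<Rightarrow> 'v \<Rightarrow> 'v) \<Rightarrow> bool" where
  "without_inversions G Adj \<phi> \<longleftrightarrow>
     (\<forall>g\<in>carrier G. \<forall>u v. Adj u v \<longrightarrow> \<not> (\<phi> g u = v \<and> \<phi> g v = u))"

definition fin_gen :: "('g, 'b) monoid_scheme \<Rightarrow> bool" where
  "fin_gen G \<longleftrightarrow> (\<exists>S. finite S \<and> S \<subseteq> carrier G \<and> generate G S = carrier G)"

definition slender_subgroup :: "('g, 'b) monoid_scheme \<Rightarrow> 'g set \<Rightarrow> bool" where
  "slender_subgroup G P \<longleftrightarrow>
     (\<forall>H. subgroup H G \<and> H \<subseteq> P \<longrightarrow> fin_gen (G\<lparr>carrier := H\<rparr>))"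

definition conjg :: "('g, 'b) monoid_scheme \<Rightarrow> 'g \<Rightarrow> 'g set \<Rightarrow> 'g set" where
  "conjg G g H = (\<lambda>h. g \<otimes>\<^bsub>G\<^esub> h \<otimes>\<^bsub>G\<^esub> inv\<^bsub>G\<^esub> g) ` H"

text \<open>The graph has countably many vertices (G is countable), so its vertex
  type can be taken to be nat.\<close>
definition rel_hyp :: "('g, 'b) monoid_scheme \<Rightarrow> 'g set set \<Rightarrow> bool" where
  "rel_hyp G \<P> \<longleftrightarrow> group G \<and> fin_gen G \<and> finite \<P> \<and>
     (\<forall>P\<in>\<P>. subgroup P G \<and> fin_gen (G\<lparr>carrier := P\<rparr>) \<and> P \<noteq> carrier G) \<and>
     (\<exists>(V::nat set) Adj \<phi>.
        simple_graph V Adj \<and> hyperbolic_graph V Adj \<and> fine_graph V Adj \<and>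
        graph_action G V Adj \<phi> \<and> finitely_many_edge_orbits G Adj \<phi> \<and>
        (\<forall>u v. Adj u v \<longrightarrow> finite (pstab G \<phi> {u, v})) \<and>
        (\<forall>P\<in>\<P>. \<exists>v\<in>V. P = pstab G \<phi> {v} \<and> infinite P) \<and>
        (\<forall>v\<in>V. infinite (pstab G \<phi> {v}) \<longrightarrow>
           (\<exists>P\<in>\<P>. \<exists>g\<in>carrier G. pstab G \<phi> {v} = conjg G g P)) \<and>
        (\<forall>P1\<in>\<P>. \<forall>P2\<in>\<P>. \<forall>g\<in>carrier G. P1 = conjg G g P2 \<longrightarrow> P1 = P2))"

definition parabolic :: "('g, 'b) monoid_scheme \<Rightarrow> 'g set set \<Rightarrow> 'g set \<Rightarrow> bool" where
  "parabolic G \<P> H \<longleftrightarrow> (\<exists>P\<in>\<P>. \<exists>g\<in>carrier G. H \<subseteq> conjg G g P)"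

definition almost_malnormal :: "('g, 'b) monoid_scheme \<Rightarrow> 'g set set \<Rightarrow> nat \<Rightarrow> bool" where
  "almost_malnormal G \<P> C \<longleftrightarrow> (\<forall>P1\<in>\<P>. \<forall>P2\<in>\<P>. \<forall>g\<in>carrier G.
     \<not> (finite (P1 \<inter> conjg G g P2) \<and> card (P1 \<inter> conjg G g P2) \<le> C) \<longrightarrow>
     P1 = P2 \<and> g \<in> P1)"

text \<open>A splitting of G (a finite graph of groups decomposition) is encoded by its
  Bass--Serre tree: an action on a simplicial tree without inversions with finitely many
  orbits of edges.  Such a tree is countable, so vertices are taken in nat.\<close>
definition splitting :: "('g, 'b) monoid_scheme \<Rightarrow> nat set \<Rightarrow> (nat \<Rightarrow> nat \<Rightarrow> bool) \<Rightarrow> ('g \<Rightarrow> nat \<Rightarrow> nat) \<Rightarrow> bool" where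
  "splitting G V Adj \<phi> \<longleftrightarrow> is_tree V Adj \<and> graph_action G V Adj \<phi> \<and>
     without_inversions G Adj \<phi> \<and> finitely_many_edge_orbits G Adj \<phi>"

definition nontrivial_action :: "('g, 'b) monoid_scheme \<Rightarrow> 'v set \<Rightarrow> ('g \<Rightarrow> 'v \<Rightarrow> 'v) \<Rightarrow> bool" where
  "nontrivial_action G V \<phi> \<longleftrightarrow> \<not> (\<exists>x\<in>V. \<forall>g\<in>carrier G. \<phi> g x = x)"

definition over_parabolic :: "('g, 'b) monoid_scheme \<Rightarrow> 'g set set \<Rightarrow> ('v \<Rightarrow> 'v \<Rightarrow> bool) \<Rightarrow> ('g \<Rightarrow> 'v \<Rightarrow> 'v) \<Rightarrow> bool" where
  "over_parabolic G \<P> Adj \<phi> \<longleftrightarrow> (\<forall>u v. Adj u v \<longrightarrow> parabolic G \<P> (pstab G \<phi> {u, v}))"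

text \<open>(k,C)-acylindrical: the pointwise stabilizer of every segment (a walk without
  repeated vertices) of length at least k+1 has at most C elements.\<close>
definition acylindrical :: "('g, 'b) monoid_scheme \<Rightarrow> ('v \<Rightarrow> 'v \<Rightarrow> bool) \<Rightarrow> ('g \<Rightarrow> 'v \<Rightarrow> 'v) \<Rightarrow> nat \<Rightarrow> nat \<Rightarrow> bool" where
  "acylindrical G Adj \<phi> k C \<longleftrightarrow> (\<forall>xs. gwalk Adj xs \<and> distinct xs \<and> length xs \<ge> k + 2 \<longrightarrow>
     finite (pstab G \<phi> (set xs)) \<and> card (pstab G \<phi> (set xs)) \<le> C)"

end

theory Submission
  imports Defs "HOL-Library.Nat_Bijection"
begin

fun wk :: "('v \<Rightarrow> 'v \<Rightarrow> bool) \<Rightarrow> 'v list \<Rightarrow> bool" where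
  "wk R [] = False"
| "wk R [x] = True"
| "wk R (x # y # r) = (R x y \<and> wk R (y # r))"

fun nb :: "'v list \<Rightarrow> bool" where
  "nb (x # y # z # r) = (x \<noteq> z \<and> nb (y # z # r))"
| "nb _ = True"

lemma gwalk_Cons2: "gwalk R (x # y # r) \<longleftrightarrow> R x y \<and> gwalk R (y # r)"
proof
  assume a: "gwalk R (x # y # r)"
  have "R x y" using a unfolding gwalk_def by (metis length_Cons nth_Cons_0 nth_Cons_Suc zero_less_Suc Suc_less_eq)
  moreover have "gwalk R (y # r)" unfolding gwalk_def
  proof (intro conjI allI impI)
    fix i assume "Suc i < length (y # r)"
    then show "R ((y # r) ! i) ((y # r) ! Suc i)"
      using a unfolding gwalk_def by (metis Suc_less_eq length_Cons nth_Cons_Suc)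
  qed simp
  ultimately show "R x y \<and> gwalk R (y # r)" by blast
next
  assume a: "R x y \<and> gwalk R (y # r)"
  show "gwalk R (x # y # r)" unfolding gwalk_def
  proof (intro conjI allI impI)
    fix i assume i: "Suc i < length (x # y # r)"
    show "R ((x # y # r) ! i) ((x # y # r) ! Suc i)"
    proof (cases i)
      case 0 then show ?thesis using a by simp
    next
      case (Suc j)
      then have "Suc j < length (y # r)" using i by simp
      then show ?thesis using a Suc unfolding gwalk_def by simp
    qed
  qed simp
qed

lemma gwalk_wk: "gwalk R xs \<longleftrightarrow> wk R xs"
proof (induction R xs rule: wk.induct)
  case (3 R x y r) then show ?case by (simp add: gwalk_Cons2)
qed (auto simp: gwalk_def)

lemma wk_nth: "wk R xs \<Longrightarrow> Suc i < length xs \<Longrightarrow> R (xs ! i) (xs ! Suc i)"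
  using gwalk_wk[of R xs] unfolding gwalk_def by blast

lemma wk_append: "wk R (xs @ y # ys) \<longleftrightarrow> wk R (xs @ [y]) \<and> wk R (y # ys)"
proof (induction xs)
  case Nil then show ?case by (cases ys) auto
next
  case (Cons a xs) then show ?case by (cases xs) auto
qed

lemma wk_Cons: "wk R (x # xs) \<Longrightarrow> xs \<noteq> [] \<Longrightarrow> wk R xs"
  by (cases xs) auto

lemma wk_take: "wk R xs \<Longrightarrow> 0 < k \<Longrightarrow> wk R (take k xs)"
proof (induction R xs arbitrary: k rule: wk.induct)
  case (3 R x y r)
  show ?case
  proof (cases "k = 1")
    case True then show ?thesis by simp
  next
    case False
    then obtain j where j: "k = Suc (Suc j)" using 3(3) by (metis One_nat_def gr0_implies_Suc not0_implies_Suc)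
    have "wk R (take (Suc j) (y # r))" using 3 by (metis zero_less_Suc wk.simps(3))
    then have "wk R (y # take j r)" by simp
    then show ?thesis using 3 j by (cases r; cases j) auto
  qed
qed auto

lemma wk_mono: "wk R xs \<Longrightarrow> (\<And>x y. R x y \<Longrightarrow> R' x y) \<Longrightarrow> wk R' xs"
  by (induction R xs rule: wk.induct) auto

lemma wk_map: "wk R xs \<Longrightarrow> (\<And>x y. R x y \<Longrightarrow> R' (f x) (f y)) \<Longrightarrow> wk R' (map f xs)"
  by (induction R xs rule: wk.induct) auto

lemma distinct_nb: "distinct xs \<Longrightarrow> nb xs"
  by (induction xs rule: nb.induct) auto

lemma nb_Cons: "nb (x # xs) \<Longrightarrow> nb xs"
  by (cases xs rule: nb.cases) auto

lemma rtranclp_wk: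
  assumes "R\<^sup>*\<^sup>* x y"
  shows "\<exists>ws. wk R ws \<and> hd ws = x \<and> last ws = y"
  using assms
proof (induction rule: converse_rtranclp_induct)
  case base then show ?case by (intro exI[of _ "[y]"]) auto
next
  case (step x z)
  then obtain ws where ws: "wk R ws" "hd ws = z" "last ws = y" by blast
  then have "ws \<noteq> []" by (cases ws) auto
  then obtain w ws' where "ws = w # ws'" by (cases ws) auto
  then show ?case using ws step
    by (intro exI[of _ "x # ws"]) auto
qed

lemma wk_shorten:
  assumes "wk R ws"
  shows "\<exists>ws'. wk R ws' \<and> hd ws' = hd ws \<and> last ws' = last ws \<and> distinct ws'"
  using assms
proof (induction "length ws" arbitrary: ws rule: less_induct)
  case less
  show ?case
  proof (cases "distinct ws")
    case True then show ?thesis using less by blast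
  next
    case False
    then obtain as z bs cs where ws: "ws = as @ [z] @ bs @ [z] @ cs"
      using not_distinct_decomp by blast
    define ws' where "ws' = as @ z # cs"
    have "wk R ((as @ [z]) @ bs @ z # cs)" using less(2) ws by simp
    then have w1: "wk R (as @ [z])" "wk R (z # bs @ z # cs)"
      using wk_append[of R as z "bs @ z # cs"] by simp_all
    have "wk R ((z # bs) @ z # cs)" using w1(2) by simp
    then have "wk R (z # cs)" using wk_append[of R "z # bs" z cs] by simp
    then have "wk R ws'" unfolding ws'_def using w1(1) wk_append[of R as z cs] by simp
    moreover have "length ws' < length ws" unfolding ws'_def ws by simp
    moreover have "hd ws' = hd ws" unfolding ws'_def ws by (cases as) auto
    moreover have "last ws' = last ws" unfolding ws'_def ws by (cases cs) auto
    ultimately show ?thesis using less(1)[of ws'] by auto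
  qed
qed

lemma rtranclp_distinct_wk:
  assumes "R\<^sup>*\<^sup>* x y"
  shows "\<exists>ws. wk R ws \<and> hd ws = x \<and> last ws = y \<and> distinct ws"
  using rtranclp_wk[OF assms] wk_shorten by metis

definition acyc :: "('v \<Rightarrow> 'v \<Rightarrow> bool) \<Rightarrow> bool" where
  "acyc R \<longleftrightarrow> \<not> (\<exists>c. cycle_list R c)"

lemma nb_distinct:
  assumes ac: "acyc R" and irr: "\<And>x. \<not> R x x"
  shows "wk R ws \<Longrightarrow> nb ws \<Longrightarrow> distinct ws"
proof (induction ws)
  case Nil then show ?case by simp
next
  case (Cons x ws')
  show ?case
  proof (cases "ws' = []")
    case True then show ?thesis by simp
  next
    case False
    have d: "distinct ws'" using Cons.IH wk_Cons[OF Cons.prems(1) False] nb_Cons[OF Cons.prems(2)] by blast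
    have "x \<notin> set ws'"
    proof
      assume "x \<in> set ws'"
      then obtain k where k: "k < length ws'" "ws' ! k = x" by (metis in_set_conv_nth)
      have w: "wk R (x # ws')" by fact
      have k0: "k \<noteq> 0"
      proof
        assume "k = 0"
        then have "R x (ws' ! 0)" using wk_nth[OF w, of 0] False by simp
        then show False using irr k \<open>k = 0\<close> by simp
      qed
      have k1: "k \<noteq> 1"
      proof
        assume "k = 1"
        then obtain a b r where "ws' = a # b # r" using k
          by (cases ws'; cases "tl ws'") auto
        then show False using Cons.prems(2) k \<open>k = 1\<close> by simp
      qed
      define c where "c = x # take k ws'"
      have "cycle_list R c"
        unfolding cycle_list_def
      proof (intro conjI)
        show "3 \<le> length c" using k k0 k1 unfolding c_def by simp
        show "distinct c" unfolding c_def using d k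
          by (auto simp: in_set_conv_nth nth_eq_iff_index_eq)
        show "gwalk R c" unfolding gwalk_wk c_def
          using wk_take[OF w, of "Suc k"] by simp
        have "R (ws' ! (k - 1)) (ws' ! k)"
          using wk_nth[OF wk_Cons[OF w False], of "k - 1"] k k0 by simp
        moreover have "last c = ws' ! (k - 1)" unfolding c_def using k k0 False
          by (simp add: last_conv_nth min_def)
        ultimately show "R (last c) (hd c)" using k unfolding c_def by simp
      qed
      then show False using ac unfolding acyc_def by blast
    qed
    then show ?thesis using d by simp
  qed
qed

lemma nb_append:
  "nb (xs @ [y]) \<Longrightarrow> nb (y # zs) \<Longrightarrow> (xs \<noteq> [] \<Longrightarrow> zs \<noteq> [] \<Longrightarrow> last xs \<noteq> hd zs)
   \<Longrightarrow> nb (xs @ y # zs)"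
proof (induction xs rule: nb.induct)
  case (1 a b c r)
  then show ?case by simp
next
  case ("2_1") then show ?case by simp
next
  case ("2_2" a)
  then show ?case by (cases zs) auto
next
  case ("2_3" a b)
  then show ?case by (cases zs) auto
qed

lemma tree_no_two_paths:
  assumes ac: "acyc R" and irr: "\<And>x. \<not> R x x"
    and sym: "\<And>x y. R x y \<Longrightarrow> R y x"
    and A: "(\<lambda>u v. R u v \<and> A u v)\<^sup>*\<^sup>* a b"
    and B: "(\<lambda>u v. R u v \<and> \<not> A u v)\<^sup>*\<^sup>* b a"
    and Asym: "\<And>u v. A u v \<Longrightarrow> A v u"
    and ab: "a \<noteq> b"
  shows False
proof -
  obtain p where p: "wk (\<lambda>u v. R u v \<and> A u v) p" "hd p = a" "last p = b" "distinct p"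
    using rtranclp_distinct_wk[OF A] by blast
  obtain q where q: "wk (\<lambda>u v. R u v \<and> \<not> A u v) q" "hd q = b" "last q = a" "distinct q"
    using rtranclp_distinct_wk[OF B] by blast
  have "p \<noteq> []" using p(1) by (cases p) auto
  have "q \<noteq> []" using q(1) by (cases q) auto
  obtain p' where p': "p = p' @ [b]" using p \<open>p \<noteq> []\<close>
    by (metis append_butlast_last_id)
  obtain q' where q': "q = b # q'" using q \<open>q \<noteq> []\<close> by (cases q) auto
  have "p' \<noteq> []" using p' p ab by auto
  have "q' \<noteq> []" using q' q ab by auto
  define w where "w = p' @ b # q'"
  have wp: "wk R (p' @ [b])" using p(1) p' wk_mono by blast
  have wq: "wk R (b # q')" using q(1) q' wk_mono by blast
  have "wk R w" unfolding w_def using wk_append[of R p' b q'] wp wq by simp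
  moreover have "nb w" unfolding w_def
  proof (rule nb_append)
    show "nb (p' @ [b])" using p p' distinct_nb by metis
    show "nb (b # q')" using q q' distinct_nb by metis
    assume "p' \<noteq> []" "q' \<noteq> []"
    have "A (last p') b"
      using wk_nth[OF p(1), of "length p' - 1"] \<open>p' \<noteq> []\<close> p'
      by (simp add: nth_append last_conv_nth)
    moreover have "\<not> A b (hd q')"
      using wk_nth[OF q(1), of 0] \<open>q' \<noteq> []\<close> q' by (cases q') auto
    ultimately show "last p' \<noteq> hd q'" using Asym by metis
  qed
  ultimately have "distinct w" using nb_distinct[OF ac irr] by blast
  moreover have "hd w = a" unfolding w_def using p p' \<open>p' \<noteq> []\<close> by (cases p') auto
  moreover have "last w = a" unfolding w_def using q q' \<open>q' \<noteq> []\<close> by simp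
  moreover have "length w \<ge> 2" unfolding w_def using \<open>p' \<noteq> []\<close> \<open>q' \<noteq> []\<close>
    by (cases p'; cases q') auto
  ultimately show False
  proof -
    assume d: "distinct w" and h: "hd w = a" and l: "last w = a" and len: "length w \<ge> 2"
    obtain y w' where ww: "w = y # w'" using len by (cases w) auto
    have "w' \<noteq> []" using len ww by auto
    then have "last w' \<in> set w'" by simp
    then show False using d h l ww \<open>w' \<noteq> []\<close> by auto
  qed
qed


lemma group_actionI:
  fixes G (structure)
  assumes G: "group G"
    and ext: "\<And>g. g \<in> carrier G \<Longrightarrow> f g \<in> extensional E"
    and cl: "\<And>g x. g \<in> carrier G \<Longrightarrow> x \<in> E \<Longrightarrow> f g x \<in> E"
    and one: "\<And>x. x \<in> E \<Longrightarrow> f \<one>\<^bsub>G\<^esub> x = x"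
    and mult: "\<And>g h x. g \<in> carrier G \<Longrightarrow> h \<in> carrier G \<Longrightarrow> x \<in> E \<Longrightarrow>
       f (g \<otimes>\<^bsub>G\<^esub> h) x = f g (f h x)"
  shows "group_action G E f"
proof -
  interpret group G by (rule G)
  have inv1: "f (inv g) (f g x) = x" if "g \<in> carrier G" "x \<in> E" for g x
    using mult[of "inv g" g x] one[of x] that by simp
  have inv2: "f g (f (inv g) x) = x" if "g \<in> carrier G" "x \<in> E" for g x
    using mult[of g "inv g" x] one[of x] that by simp
  have bij: "f g \<in> Bij E" if g: "g \<in> carrier G" for g
    unfolding Bij_def
  proof (intro IntI CollectI ext[OF g])
    show "bij_betw (f g) E E"
      unfolding bij_betw_def
    proof
      show "inj_on (f g) E"
        by (metis g inj_onI inv1)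
      show "f g ` E = E"
      proof
        show "f g ` E \<subseteq> E" using cl g by blast
        show "E \<subseteq> f g ` E"
          using g inv2 cl inv_closed by (metis image_eqI subsetI)
      qed
    qed
  qed
  have hom: "f \<in> hom G (BijGroup E)"
    unfolding hom_def
  proof (intro CollectI conjI ballI)
    show "f \<in> carrier G \<rightarrow> carrier (BijGroup E)"
      using bij by (auto simp: BijGroup_def)
    fix g h assume g: "g \<in> carrier G" and h: "h \<in> carrier G"
    have "f (g \<otimes> h) = compose E (f g) (f h)"
    proof (rule extensionalityI[of _ E])
      show "f (g \<otimes> h) \<in> extensional E" using ext g h by simp
      show "compose E (f g) (f h) \<in> extensional E" by (simp add: compose_def)
      fix x assume "x \<in> E"
      then show "f (g \<otimes> h) x = compose E (f g) (f h) x"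
        using mult g h by (simp add: compose_def)
    qed
    then show "f (g \<otimes> h) = f g \<otimes>\<^bsub>BijGroup E\<^esub> f h"
      using bij g h by (simp add: BijGroup_def)
  qed
  show ?thesis
    unfolding group_action_def group_hom_def group_hom_axioms_def
    using G group_BijGroup hom by blast
qed

context group
begin

lemma mult_inv_cancel_left: "x \<in> carrier G \<Longrightarrow> y \<in> carrier G \<Longrightarrow> x \<otimes> (inv x \<otimes> y) = y"
  by (simp add: m_assoc[symmetric])

lemma inv_mult_cancel_left: "x \<in> carrier G \<Longrightarrow> y \<in> carrier G \<Longrightarrow> inv x \<otimes> (x \<otimes> y) = y"
  by (simp add: m_assoc[symmetric])

lemma conjg_sub: "g \<in> carrier G \<Longrightarrow> H \<subseteq> carrier G \<Longrightarrow> conjg G g H \<subseteq> carrier G"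
  unfolding conjg_def by auto

lemma conjg_mult:
  assumes "g \<in> carrier G" "h \<in> carrier G" "H \<subseteq> carrier G"
  shows "conjg G (g \<otimes> h) H = conjg G g (conjg G h H)"
  unfolding conjg_def image_image
proof (rule image_cong[OF refl])
  fix x assume "x \<in> H"
  then have x: "x \<in> carrier G" using assms by blast
  show "g \<otimes> h \<otimes> x \<otimes> inv (g \<otimes> h) = g \<otimes> (h \<otimes> x \<otimes> inv h) \<otimes> inv g"
    using assms x by (simp add: inv_mult_group m_assoc)
qed

lemma conjg_one: "H \<subseteq> carrier G \<Longrightarrow> conjg G \<one> H = H"
  unfolding conjg_def by (auto simp: subsetD image_iff)

lemma conjg_inv_cancel:
  assumes "g \<in> carrier G" "H \<subseteq> carrier G"
  shows "conjg G (inv g) (conjg G g H) = H"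
  using conjg_mult[of "inv g" g H] assms conjg_one by simp

lemma conjg_cancel_inv:
  assumes "g \<in> carrier G" "H \<subseteq> carrier G"
  shows "conjg G g (conjg G (inv g) H) = H"
  using conjg_mult[of g "inv g" H] assms conjg_one by simp

lemma conjg_inj: "g \<in> carrier G \<Longrightarrow> inj_on (\<lambda>x. g \<otimes> x \<otimes> inv g) (carrier G)"
  unfolding inj_on_def by (simp add: m_assoc)

lemma conjg_card:
  assumes "g \<in> carrier G" "H \<subseteq> carrier G"
  shows "card (conjg G g H) = card H" "finite (conjg G g H) \<longleftrightarrow> finite H"
proof -
  have "inj_on (\<lambda>x. g \<otimes> x \<otimes> inv g) H" using conjg_inj[OF assms(1)] assms(2) inj_on_subset by blast
  then show "card (conjg G g H) = card H" "finite (conjg G g H) \<longleftrightarrow> finite H"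
    unfolding conjg_def by (auto simp: card_image finite_image_iff)
qed

lemma conjg_Int:
  assumes "g \<in> carrier G" "A \<subseteq> carrier G" "B \<subseteq> carrier G"
  shows "conjg G g (A \<inter> B) = conjg G g A \<inter> conjg G g B"
  unfolding conjg_def
  using inj_on_image_Int[OF conjg_inj[OF assms(1)] assms(2,3)] .

lemma conjg_mono: "A \<subseteq> B \<Longrightarrow> conjg G g A \<subseteq> conjg G g B"
  unfolding conjg_def by auto

lemma conjg_subgroup_self:
  assumes "subgroup H G" "h \<in> H"
  shows "conjg G h H = H"
proof -
  have hc: "h \<in> carrier G" using assms subgroup.subset by blast
  have Hc: "H \<subseteq> carrier G" using assms subgroup.subset by blast
  have 1: "conjg G h H \<subseteq> H"
    unfolding conjg_def using assms by (auto intro!: subgroup.m_closed subgroup.m_inv_closed)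
  have 2: "conjg G (inv h) H \<subseteq> H"
    unfolding conjg_def using assms
    by (auto intro!: subgroup.m_closed subgroup.m_inv_closed simp: hc)
  have "H = conjg G h (conjg G (inv h) H)" using conjg_cancel_inv[OF hc Hc] by simp
  also have "\<dots> \<subseteq> conjg G h H" using conjg_mono[OF 2] .
  finally show ?thesis using 1 by blast
qed

lemma conjg_mem: "g \<in> carrier G \<Longrightarrow> x \<in> H \<Longrightarrow> g \<otimes> x \<otimes> inv g \<in> conjg G g H"
  unfolding conjg_def by blast

end

definition small :: "nat \<Rightarrow> 'a set \<Rightarrow> bool" where
  "small C K \<longleftrightarrow> finite K \<and> card K \<le> C"

lemma small_subset: "small C B \<Longrightarrow> A \<subseteq> B \<Longrightarrow> small C A"
  unfolding small_def by (meson card_mono dual_order.trans rev_finite_subset)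

lemma (in group) small_conjg:
  "g \<in> carrier G \<Longrightarrow> H \<subseteq> carrier G \<Longrightarrow> small C (conjg G g H) \<longleftrightarrow> small C H"
  unfolding small_def using conjg_card by simp

lemma (in group) malnormal_conj:
  assumes mal: "almost_malnormal G PP C"
    and sg: "\<And>P. P \<in> PP \<Longrightarrow> subgroup P G"
    and P1: "P1 \<in> PP" and P2: "P2 \<in> PP" and g1: "g1 \<in> carrier G" and g2: "g2 \<in> carrier G"
    and ns: "\<not> small C (conjg G g1 P1 \<inter> conjg G g2 P2)"
  shows "P1 = P2 \<and> inv g1 \<otimes> g2 \<in> P1"
proof -
  have P1c: "P1 \<subseteq> carrier G" and P2c: "P2 \<subseteq> carrier G" using sg P1 P2 subgroup.subset by blast+
  have c1: "conjg G g1 P1 \<subseteq> carrier G" and c2: "conjg G g2 P2 \<subseteq> carrier G"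
    using conjg_sub g1 g2 P1c P2c by auto
  have "conjg G (inv g1) (conjg G g1 P1 \<inter> conjg G g2 P2)
        = P1 \<inter> conjg G (inv g1 \<otimes> g2) P2"
    using conjg_Int[of "inv g1", OF _ c1 c2] g1 g2 conjg_inv_cancel[OF g1 P1c]
      conjg_mult[of "inv g1" g2 P2] P2c by simp
  moreover have "\<not> small C (conjg G (inv g1) (conjg G g1 P1 \<inter> conjg G g2 P2))"
    using small_conjg[of "inv g1" "conjg G g1 P1 \<inter> conjg G g2 P2" C] ns g1 c1 by auto
  ultimately have ns2: "\<not> small C (P1 \<inter> conjg G (inv g1 \<otimes> g2) P2)" by simp
  have hc: "inv g1 \<otimes> g2 \<in> carrier G" using g1 g2 by simp
  show ?thesis
    using mal P1 P2 hc ns2 unfolding almost_malnormal_def small_def by blast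
qed

lemma (in group) malnormal_eq:
  assumes mal: "almost_malnormal G PP C"
    and sg: "\<And>P. P \<in> PP \<Longrightarrow> subgroup P G"
    and P1: "P1 \<in> PP" and P2: "P2 \<in> PP" and g1: "g1 \<in> carrier G" and g2: "g2 \<in> carrier G"
    and ns: "\<not> small C (conjg G g1 P1 \<inter> conjg G g2 P2)"
  shows "conjg G g1 P1 = conjg G g2 P2"
proof -
  have e: "P1 = P2" and h: "inv g1 \<otimes> g2 \<in> P1" using malnormal_conj[OF assms] by auto
  have P1c: "P1 \<subseteq> carrier G" using sg P1 subgroup.subset by blast
  have hc: "inv g1 \<otimes> g2 \<in> carrier G" using g1 g2 by simp
  have "g2 = g1 \<otimes> (inv g1 \<otimes> g2)" using g1 g2 by (simp add: m_assoc[symmetric])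
  then have "conjg G g2 P2 = conjg G g1 (conjg G (inv g1 \<otimes> g2) P1)"
    using conjg_mult[OF g1 hc P1c] e by metis
  also have "\<dots> = conjg G g1 P1" using conjg_subgroup_self[OF sg[OF P1] h] by simp
  finally show ?thesis by simp
qed

lemma (in group) malnormal_fix:
  assumes mal: "almost_malnormal G PP C"
    and sg: "\<And>P. P \<in> PP \<Longrightarrow> subgroup P G"
    and P: "P \<in> PP" and h: "h \<in> carrier G" and g: "g \<in> carrier G"
    and fx: "conjg G g (conjg G h P) = conjg G h P"
    and ns: "\<not> small C (conjg G h P)"
  shows "g \<in> conjg G h P"
proof -
  have Pc: "P \<subseteq> carrier G" using sg P subgroup.subset by blast
  have gh: "g \<otimes> h \<in> carrier G" using g h by simp
  have "conjg G (g \<otimes> h) P = conjg G h P" using conjg_mult[OF g h Pc] fx by simp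
  then have "\<not> small C (conjg G h P \<inter> conjg G (g \<otimes> h) P)" using ns by simp
  then have k: "inv h \<otimes> (g \<otimes> h) \<in> P" using malnormal_conj[OF mal sg P P h gh] by blast
  have "h \<otimes> (inv h \<otimes> (g \<otimes> h)) \<otimes> inv h \<in> conjg G h P" using conjg_mem[OF h k] .
  moreover have "h \<otimes> (inv h \<otimes> (g \<otimes> h)) \<otimes> inv h = g"
    using g h by (simp add: m_assoc mult_inv_cancel_left)
  ultimately show ?thesis by simp
qed

lemma pstab_image:
  fixes G (structure)
  assumes ga: "group_action G E \<phi>" and S: "S \<subseteq> E" and g: "g \<in> carrier G"
  shows "pstab G \<phi> (\<phi> g ` S) = conjg G g (pstab G \<phi> S)"
proof -
  interpret group_action G E \<phi> by (rule ga)
  interpret group G using group_hom group_hom.axioms(1) by blast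
  have ig: "inv g \<in> carrier G" using g by simp
  show ?thesis
  proof
    show "pstab G \<phi> (\<phi> g ` S) \<subseteq> conjg G g (pstab G \<phi> S)"
    proof
      fix h assume h: "h \<in> pstab G \<phi> (\<phi> g ` S)"
      then have hc: "h \<in> carrier G" unfolding pstab_def by blast
      define k where "k = inv g \<otimes> h \<otimes> g"
      have kc: "k \<in> carrier G" unfolding k_def using hc g by simp
      have "k \<in> pstab G \<phi> S" unfolding pstab_def
      proof (intro CollectI conjI ballI kc)
        fix x assume x: "x \<in> S"
        then have xE: "x \<in> E" using S by blast
        have gx: "\<phi> g x \<in> E" using element_image g xE by blast
        have ih: "inv g \<otimes> h \<in> carrier G" using ig hc by simp
        have "\<phi> k x = \<phi> (inv g \<otimes> h) (\<phi> g x)"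
          unfolding k_def using composition_rule[OF xE ih g] .
        also have "\<dots> = \<phi> (inv g) (\<phi> h (\<phi> g x))"
          using composition_rule[OF gx ig hc] .
        finally have "\<phi> k x = \<phi> (inv g) (\<phi> h (\<phi> g x))" .
        also have "\<phi> h (\<phi> g x) = \<phi> g x" using h x unfolding pstab_def by blast
        also have "\<phi> (inv g) (\<phi> g x) = x" using orbit_sym_aux g xE by blast
        finally show "\<phi> k x = x" .
      qed
      moreover have "h = g \<otimes> k \<otimes> inv g" unfolding k_def using hc g
        by (simp add: m_assoc mult_inv_cancel_left)
      ultimately show "h \<in> conjg G g (pstab G \<phi> S)" unfolding conjg_def by blast
    qed
  next
    show "conjg G g (pstab G \<phi> S) \<subseteq> pstab G \<phi> (\<phi> g ` S)"
    proof
      fix h assume "h \<in> conjg G g (pstab G \<phi> S)"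
      then obtain k where k: "k \<in> pstab G \<phi> S" and h: "h = g \<otimes> k \<otimes> inv g"
        unfolding conjg_def by blast
      have kc: "k \<in> carrier G" using k unfolding pstab_def by blast
      have hc: "h \<in> carrier G" using h kc g by simp
      show "h \<in> pstab G \<phi> (\<phi> g ` S)" unfolding pstab_def
      proof (intro CollectI conjI ballI hc)
        fix y assume "y \<in> \<phi> g ` S"
        then obtain x where x: "x \<in> S" and y: "y = \<phi> g x" by blast
        have xE: "x \<in> E" using x S by blast
        have gx: "\<phi> g x \<in> E" using element_image g xE by blast
        have gk: "g \<otimes> k \<in> carrier G" using g kc by simp
        have igx: "\<phi> (inv g) (\<phi> g x) \<in> E" using element_image ig gx by blast
        have "\<phi> h y = \<phi> (g \<otimes> k) (\<phi> (inv g) (\<phi> g x))"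
          unfolding h y using composition_rule[OF gx gk ig] .
        also have "\<dots> = \<phi> g (\<phi> k (\<phi> (inv g) (\<phi> g x)))"
          using composition_rule[OF igx g kc] .
        finally have "\<phi> h y = \<phi> g (\<phi> k (\<phi> (inv g) (\<phi> g x)))" .
        also have "\<phi> (inv g) (\<phi> g x) = x" using orbit_sym_aux g xE by blast
        also have "\<phi> k x = x" using k x unfolding pstab_def by blast
        finally show "\<phi> h y = y" using y by simp
      qed
    qed
  qed
qed


locale cylsetup =
  fixes G :: "('g, 'b) monoid_scheme" (structure) and PP :: "'g set set" and C :: nat
    and V :: "nat set" and Adj :: "nat \<Rightarrow> nat \<Rightarrow> bool" and \<phi> :: "'g \<Rightarrow> nat \<Rightarrow> nat"
  assumes grp: "group G"
    and sgP: "\<And>P. P \<in> PP \<Longrightarrow> subgroup P G"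
    and infP: "\<And>P. P \<in> PP \<Longrightarrow> infinite P"
    and neP: "\<And>P. P \<in> PP \<Longrightarrow> P \<noteq> carrier G"
    and mal: "almost_malnormal G PP C"
    and spl: "splitting G V Adj \<phi>"
    and ntr: "nontrivial_action G V \<phi>"
    and ovp: "over_parabolic G PP Adj \<phi>"

sublocale cylsetup \<subseteq> group G by (rule grp)

context cylsetup
begin

lemma ga: "group_action G V \<phi>"
  using spl unfolding splitting_def graph_action_def by blast

lemma tree: "is_tree V Adj" using spl unfolding splitting_def by blast

lemma simple: "simple_graph V Adj" using tree unfolding is_tree_def by blast

lemma adjV: "Adj u v \<Longrightarrow> u \<in> V \<and> v \<in> V" using simple unfolding simple_graph_def by blast
lemma adj_irr: "\<not> Adj u u" using simple unfolding simple_graph_def by blast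
lemma adj_sym: "Adj u v \<Longrightarrow> Adj v u" using simple unfolding simple_graph_def by blast

lemma adj_act: "g \<in> carrier G \<Longrightarrow> Adj u v \<Longrightarrow> Adj (\<phi> g u) (\<phi> g v)"
  using spl unfolding splitting_def graph_action_def by blast

lemma noinv: "g \<in> carrier G \<Longrightarrow> Adj u v \<Longrightarrow> \<not> (\<phi> g u = v \<and> \<phi> g v = u)"
  using spl unfolding splitting_def without_inversions_def by blast

lemma phi_V: "g \<in> carrier G \<Longrightarrow> x \<in> V \<Longrightarrow> \<phi> g x \<in> V"
  using group_action.element_image[OF ga] by blast

lemma phi_comp: "g \<in> carrier G \<Longrightarrow> h \<in> carrier G \<Longrightarrow> x \<in> V \<Longrightarrow> \<phi> (g \<otimes> h) x = \<phi> g (\<phi> h x)"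
  using group_action.composition_rule[OF ga] by blast

lemma phi_one: "x \<in> V \<Longrightarrow> \<phi> \<one> x = x"
  using group_action.id_eq_one[OF ga] by (metis restrict_apply')

lemma phi_inv: "g \<in> carrier G \<Longrightarrow> x \<in> V \<Longrightarrow> \<phi> (inv g) (\<phi> g x) = x"
  using group_action.orbit_sym_aux[OF ga] by blast

lemma phi_inv': "g \<in> carrier G \<Longrightarrow> x \<in> V \<Longrightarrow> \<phi> g (\<phi> (inv g) x) = x"
  using phi_inv[of "inv g" x] by simp

lemma phi_ext: "g \<in> carrier G \<Longrightarrow> \<phi> g \<in> extensional V"
  using group_action.bij_prop0[OF ga] Bij_imp_extensional by blast

definition "Ed = {{u, v} | u v. Adj u v}"
definition "CJ = {conjg G h P | h P. h \<in> carrier G \<and> P \<in> PP}"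
definition "st e = pstab G \<phi> e"
definition "big e \<longleftrightarrow> \<not> small C (st e)"
definition "Qof e = (SOME Q. Q \<in> CJ \<and> st e \<subseteq> Q)"
definition "act g e = \<phi> g ` e"

lemma Ed_iff: "e \<in> Ed \<longleftrightarrow> (\<exists>u v. Adj u v \<and> e = {u, v})"
  unfolding Ed_def by blast

lemma Ed_sub: "e \<in> Ed \<Longrightarrow> e \<subseteq> V"
  unfolding Ed_iff using adjV by blast

lemma st_sub: "st e \<subseteq> carrier G" unfolding st_def pstab_def by blast

lemma act_sub: "e \<subseteq> V \<Longrightarrow> g \<in> carrier G \<Longrightarrow> act g e \<subseteq> V"
  unfolding act_def using phi_V by blast

lemma act_Ed: "e \<in> Ed \<Longrightarrow> g \<in> carrier G \<Longrightarrow> act g e \<in> Ed"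
  unfolding Ed_iff act_def using adj_act by fastforce

lemma act_comp: "e \<subseteq> V \<Longrightarrow> g \<in> carrier G \<Longrightarrow> h \<in> carrier G \<Longrightarrow> act (g \<otimes> h) e = act g (act h e)"
  unfolding act_def image_image using phi_comp by (auto intro!: image_cong)

lemma act_one: "e \<subseteq> V \<Longrightarrow> act \<one> e = e"
  unfolding act_def using phi_one by (simp add: subset_eq)

lemma act_inv: "e \<subseteq> V \<Longrightarrow> g \<in> carrier G \<Longrightarrow> act (inv g) (act g e) = e"
  unfolding act_def image_image using phi_inv by (simp add: subset_eq)

lemma act_inv': "e \<subseteq> V \<Longrightarrow> g \<in> carrier G \<Longrightarrow> act g (act (inv g) e) = e"
  using act_inv[of e "inv g"] by simp

lemma st_act: "e \<subseteq> V \<Longrightarrow> g \<in> carrier G \<Longrightarrow> st (act g e) = conjg G g (st e)"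
  unfolding st_def act_def using pstab_image[OF ga] by blast

lemma big_act: "e \<subseteq> V \<Longrightarrow> g \<in> carrier G \<Longrightarrow> big (act g e) \<longleftrightarrow> big e"
  unfolding big_def using st_act small_conjg st_sub by simp

lemma CJ_E: "Q \<in> CJ \<Longrightarrow> (\<And>h P. h \<in> carrier G \<Longrightarrow> P \<in> PP \<Longrightarrow> Q = conjg G h P \<Longrightarrow> thesis) \<Longrightarrow> thesis"
  unfolding CJ_def by blast

lemma CJ_sub: "Q \<in> CJ \<Longrightarrow> Q \<subseteq> carrier G"
proof -
  assume "Q \<in> CJ"
  then obtain h P where hP: "h \<in> carrier G" "P \<in> PP" "Q = conjg G h P" by (rule CJ_E)
  then show ?thesis using conjg_sub[OF hP(1)] sgP[OF hP(2)] subgroup.subset by metis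
qed

lemma CJ_big: "Q \<in> CJ \<Longrightarrow> \<not> small C Q"
proof -
  assume "Q \<in> CJ"
  then obtain h P where hP: "h \<in> carrier G" "P \<in> PP" "Q = conjg G h P" by (rule CJ_E)
  have "P \<subseteq> carrier G" using sgP[OF hP(2)] subgroup.subset by metis
  then have "finite Q \<longleftrightarrow> finite P" using conjg_card(2)[OF hP(1)] hP(3) by simp
  then show ?thesis using infP[OF hP(2)] unfolding small_def by simp
qed

lemma CJ_conj: "Q \<in> CJ \<Longrightarrow> g \<in> carrier G \<Longrightarrow> conjg G g Q \<in> CJ"
proof -
  assume Q: "Q \<in> CJ" and g: "g \<in> carrier G"
  obtain h P where hP: "h \<in> carrier G" "P \<in> PP" "Q = conjg G h P" using Q by (rule CJ_E)
  have "P \<subseteq> carrier G" using sgP[OF hP(2)] subgroup.subset by metis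
  then have "conjg G g Q = conjg G (g \<otimes> h) P" using conjg_mult[OF g hP(1)] hP(3) by simp
  moreover have "g \<otimes> h \<in> carrier G" using g hP(1) by simp
  ultimately show ?thesis unfolding CJ_def using hP(2) by blast
qed

lemma CJ_uniq: "Q1 \<in> CJ \<Longrightarrow> Q2 \<in> CJ \<Longrightarrow> \<not> small C (Q1 \<inter> Q2) \<Longrightarrow> Q1 = Q2"
proof -
  assume a: "Q1 \<in> CJ" "Q2 \<in> CJ" "\<not> small C (Q1 \<inter> Q2)"
  obtain h1 P1 where 1: "h1 \<in> carrier G" "P1 \<in> PP" "Q1 = conjg G h1 P1" using a(1) by (rule CJ_E)
  obtain h2 P2 where 2: "h2 \<in> carrier G" "P2 \<in> PP" "Q2 = conjg G h2 P2" using a(2) by (rule CJ_E)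
  show ?thesis using malnormal_eq[OF mal sgP 1(2) 2(2) 1(1) 2(1)] a(3) 1(3) 2(3) by blast
qed

lemma Qof: "e \<in> Ed \<Longrightarrow> Qof e \<in> CJ \<and> st e \<subseteq> Qof e"
proof -
  assume "e \<in> Ed"
  then obtain u v where "Adj u v" "e = {u, v}" unfolding Ed_iff by blast
  then have "parabolic G PP (st e)" using ovp unfolding over_parabolic_def st_def by blast
  then have "\<exists>Q. Q \<in> CJ \<and> st e \<subseteq> Q" unfolding parabolic_def CJ_def by blast
  then show ?thesis unfolding Qof_def by (rule someI_ex)
qed

lemma Qof_uniq: "e \<in> Ed \<Longrightarrow> big e \<Longrightarrow> Q \<in> CJ \<Longrightarrow> st e \<subseteq> Q \<Longrightarrow> Qof e = Q"
proof -
  assume a: "e \<in> Ed" "big e" "Q \<in> CJ" "st e \<subseteq> Q"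
  have "\<not> small C (Qof e \<inter> Q)"
    using a Qof[OF a(1)] small_subset[of C "Qof e \<inter> Q" "st e"] unfolding big_def by blast
  then show ?thesis using CJ_uniq Qof[OF a(1)] a(3) by blast
qed

lemma Qof_act: "e \<in> Ed \<Longrightarrow> big e \<Longrightarrow> g \<in> carrier G \<Longrightarrow> Qof (act g e) = conjg G g (Qof e)"
proof -
  assume a: "e \<in> Ed" "big e" "g \<in> carrier G"
  have "st (act g e) \<subseteq> conjg G g (Qof e)"
    using st_act[OF Ed_sub[OF a(1)] a(3)] conjg_mono Qof[OF a(1)] by blast
  moreover have "conjg G g (Qof e) \<in> CJ" using CJ_conj Qof[OF a(1)] a(3) by blast
  ultimately show ?thesis
    using Qof_uniq act_Ed a big_act Ed_sub by blast
qed


definition "Sr e e' \<longleftrightarrow> e \<in> Ed \<and> e' \<in> Ed \<and> e \<inter> e' \<noteq> {} \<and> (e = e' \<or> big e \<and> big e' \<and> Qof e = Qof e')"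
definition "cyl e = {e'. Sr\<^sup>*\<^sup>* e e'}"
definition "Cyls = cyl ` Ed"
definition "actY g Y = act g ` Y"

lemma Sr_sym: "Sr e e' \<Longrightarrow> Sr e' e"
  unfolding Sr_def by blast

lemma Srs_sym: "Sr\<^sup>*\<^sup>* e e' \<Longrightarrow> Sr\<^sup>*\<^sup>* e' e"
proof (induction rule: rtranclp_induct)
  case base then show ?case by simp
next
  case (step y z)
  then show ?case using Sr_sym by (meson converse_rtranclp_into_rtranclp)
qed

lemma Srs_prop: "Sr\<^sup>*\<^sup>* e e' \<Longrightarrow> e \<in> Ed \<Longrightarrow> e' \<in> Ed \<and> (e' = e \<or> big e \<and> big e' \<and> Qof e = Qof e')"
proof (induction rule: rtranclp_induct)
  case base then show ?case by simp
next
  case (step y z)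
  then show ?case unfolding Sr_def by metis
qed

lemma cyl_eq: "Sr\<^sup>*\<^sup>* e e' \<Longrightarrow> cyl e = cyl e'"
proof -
  assume a: "Sr\<^sup>*\<^sup>* e e'"
  have "Sr\<^sup>*\<^sup>* e x \<longleftrightarrow> Sr\<^sup>*\<^sup>* e' x" for x
    using a Srs_sym[OF a] by (meson rtranclp_trans)
  then show ?thesis unfolding cyl_def by blast
qed

lemma cyl_self: "e \<in> cyl e" unfolding cyl_def by simp

lemma cyl_Ed: "e \<in> Ed \<Longrightarrow> cyl e \<subseteq> Ed"
  unfolding cyl_def using Srs_prop by blast

lemma Cyls_mem: "Y \<in> Cyls \<Longrightarrow> e \<in> Y \<Longrightarrow> Y = cyl e"
  unfolding Cyls_def using cyl_eq unfolding cyl_def by blast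

lemma Cyls_disj: "Y \<in> Cyls \<Longrightarrow> Y' \<in> Cyls \<Longrightarrow> e \<in> Y \<Longrightarrow> e \<in> Y' \<Longrightarrow> Y = Y'"
  using Cyls_mem by metis

lemma Cyls_Ed: "Y \<in> Cyls \<Longrightarrow> Y \<subseteq> Ed"
  unfolding Cyls_def using cyl_Ed by blast

lemma Cyls_ne: "Y \<in> Cyls \<Longrightarrow> Y \<noteq> {}"
  unfolding Cyls_def using cyl_self by blast

lemma cyl_small: "e \<in> Ed \<Longrightarrow> \<not> big e \<Longrightarrow> cyl e = {e}"
  unfolding cyl_def using Srs_prop by auto

lemma Sr_act: "Sr e e' \<Longrightarrow> g \<in> carrier G \<Longrightarrow> Sr (act g e) (act g e')"
proof -
  assume a: "Sr e e'" and g: "g \<in> carrier G"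
  have E: "e \<in> Ed" "e' \<in> Ed" using a unfolding Sr_def by auto
  have "act g e \<inter> act g e' \<noteq> {}" using a unfolding Sr_def act_def by blast
  moreover have "act g e \<in> Ed" "act g e' \<in> Ed" using act_Ed E g by auto
  moreover have "e = e' \<or> big e \<and> big e' \<and> Qof e = Qof e'" using a unfolding Sr_def by blast
  then have "act g e = act g e' \<or> big (act g e) \<and> big (act g e') \<and> Qof (act g e) = Qof (act g e')"
    using Qof_act[OF E(1) _ g] Qof_act[OF E(2) _ g] big_act[OF Ed_sub[OF E(1)] g]
      big_act[OF Ed_sub[OF E(2)] g] by metis
  ultimately show ?thesis unfolding Sr_def by blast
qed

lemma Srs_act: "Sr\<^sup>*\<^sup>* e e' \<Longrightarrow> g \<in> carrier G \<Longrightarrow> Sr\<^sup>*\<^sup>* (act g e) (act g e')"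
proof (induction rule: rtranclp_induct)
  case base then show ?case by simp
next
  case (step y z)
  then show ?case using Sr_act by (meson rtranclp.rtrancl_into_rtrancl)
qed

lemma actY_cyl: "e \<in> Ed \<Longrightarrow> g \<in> carrier G \<Longrightarrow> actY g (cyl e) = cyl (act g e)"
proof
  assume e: "e \<in> Ed" and g: "g \<in> carrier G"
  show "actY g (cyl e) \<subseteq> cyl (act g e)"
    unfolding actY_def cyl_def using Srs_act g by blast
  show "cyl (act g e) \<subseteq> actY g (cyl e)"
  proof
    fix e'' assume e'': "e'' \<in> cyl (act g e)"
    have ge: "act g e \<in> Ed" using act_Ed e g by blast
    have "e'' \<in> Ed" using cyl_Ed[OF ge] e'' by blast
    then have V'': "e'' \<subseteq> V" using Ed_sub by blast
    have ig: "inv g \<in> carrier G" using g by simp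
    have "Sr\<^sup>*\<^sup>* (act (inv g) (act g e)) (act (inv g) e'')"
      using Srs_act[OF _ ig] e'' unfolding cyl_def by blast
    then have "act (inv g) e'' \<in> cyl e"
      using act_inv[OF Ed_sub[OF e] g] unfolding cyl_def by simp
    moreover have "e'' = act g (act (inv g) e'')" using act_inv'[OF V'' g] by simp
    ultimately show "e'' \<in> actY g (cyl e)" unfolding actY_def by blast
  qed
qed

lemma actY_Cyls: "Y \<in> Cyls \<Longrightarrow> g \<in> carrier G \<Longrightarrow> actY g Y \<in> Cyls"
  unfolding Cyls_def using actY_cyl act_Ed by auto

lemma actY_comp: "Y \<in> Cyls \<Longrightarrow> g \<in> carrier G \<Longrightarrow> h \<in> carrier G \<Longrightarrow>
    actY (g \<otimes> h) Y = actY g (actY h Y)"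
proof -
  assume a: "Y \<in> Cyls" "g \<in> carrier G" "h \<in> carrier G"
  have "\<And>e. e \<in> Y \<Longrightarrow> act (g \<otimes> h) e = act g (act h e)"
  proof -
    fix e assume "e \<in> Y"
    then have "e \<subseteq> V" using Cyls_Ed[OF a(1)] Ed_sub by blast
    then show "act (g \<otimes> h) e = act g (act h e)" using act_comp a by blast
  qed
  then show ?thesis unfolding actY_def image_image by (rule image_cong[OF refl])
qed

lemma actY_one: "Y \<in> Cyls \<Longrightarrow> actY \<one> Y = Y"
proof -
  assume a: "Y \<in> Cyls"
  have "\<And>e. e \<in> Y \<Longrightarrow> act \<one> e = e"
  proof -
    fix e assume "e \<in> Y"
    then have "e \<subseteq> V" using Cyls_Ed[OF a(1)] Ed_sub by blast
    then show "act \<one> e = e" using act_one by blast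
  qed
  then show ?thesis unfolding actY_def by (metis image_cong image_ident)
qed

lemma stabY:
  assumes e: "e \<in> Ed" and g: "g \<in> carrier G" and fx: "actY g (cyl e) = cyl e"
  shows "(big e \<longrightarrow> g \<in> Qof e) \<and> (\<not> big e \<longrightarrow> g \<in> st e)"
proof (intro conjI impI)
  have ge: "act g e \<in> cyl e" using fx cyl_self unfolding actY_def by blast
  assume b: "big e"
  have "Qof (act g e) = Qof e"
    using Srs_prop[of e "act g e"] ge e unfolding cyl_def by auto
  then have fx2: "conjg G g (Qof e) = Qof e" using Qof_act[OF e b g] by simp
  obtain h P where hP: "h \<in> carrier G" "P \<in> PP" "Qof e = conjg G h P"
    using Qof[OF e] by (meson CJ_E)
  show "g \<in> Qof e"
    using malnormal_fix[OF mal sgP hP(2) hP(1) g] fx2 hP(3) CJ_big Qof[OF e] by metis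
next
  assume nb: "\<not> big e"
  have "actY g {e} = {e}" using fx cyl_small[OF e nb] by simp
  then have ae: "act g e = e" unfolding actY_def by simp
  obtain u v where uv: "Adj u v" "e = {u, v}" using e Ed_iff by blast
  have inj: "inj_on (\<phi> g) V" using group_action.inj_prop[OF ga g] .
  have uV: "u \<in> V" "v \<in> V" using adjV uv by auto
  have "u \<noteq> v" using adj_irr uv by blast
  have gu: "\<phi> g u \<in> {u, v}" and gv: "\<phi> g v \<in> {u, v}" using ae uv unfolding act_def by auto
  have neq: "\<phi> g u \<noteq> \<phi> g v" using inj uV \<open>u \<noteq> v\<close> by (meson inj_on_eq_iff)
  have "\<phi> g u = u"
  proof (rule ccontr)
    assume "\<phi> g u \<noteq> u"
    then have "\<phi> g u = v" using gu by blast
    then have "\<phi> g v = u" using gv neq by auto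
    then show False using noinv[OF g uv(1)] \<open>\<phi> g u = v\<close> by blast
  qed
  moreover have "\<phi> g v = v" using gv neq calculation by auto
  ultimately show "g \<in> st e" unfolding st_def pstab_def using g uv by auto
qed

end


lemma (in group) conjg_carrier: "h \<in> carrier G \<Longrightarrow> conjg G h (carrier G) = carrier G"
proof
  assume h: "h \<in> carrier G"
  show "conjg G h (carrier G) \<subseteq> carrier G" using conjg_sub h by blast
  have "conjg G (inv h) (carrier G) \<subseteq> carrier G" using conjg_sub h by simp
  then have "conjg G h (conjg G (inv h) (carrier G)) \<subseteq> conjg G h (carrier G)" by (rule conjg_mono)
  then show "carrier G \<subseteq> conjg G h (carrier G)" using conjg_cancel_inv[OF h] by simp
qed

lemma parabolic_mono: "parabolic G PP K \<Longrightarrow> H \<subseteq> K \<Longrightarrow> parabolic G PP H"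
  unfolding parabolic_def by blast

context cylsetup
begin

definition "inc v Y \<longleftrightarrow> v \<in> V \<and> Y \<in> Cyls \<and> (\<exists>e\<in>Y. v \<in> e)"
definition "NV = Inl ` V \<union> Inr ` Cyls"
definition "NA x y \<longleftrightarrow> (\<exists>v Y. inc v Y \<and> (x = Inl v \<and> y = Inr Y \<or> x = Inr Y \<and> y = Inl v))"
definition "nphi g x = (if x \<in> NV then (case x of Inl v \<Rightarrow> Inl (\<phi> g v) | Inr Y \<Rightarrow> Inr (actY g Y)) else undefined)"

lemma nphi_Inl: "v \<in> V \<Longrightarrow> nphi g (Inl v) = Inl (\<phi> g v)"
  unfolding nphi_def NV_def by simp

lemma nphi_Inr: "Y \<in> Cyls \<Longrightarrow> nphi g (Inr Y) = Inr (actY g Y)"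
  unfolding nphi_def NV_def by simp

lemma inc_act: "inc v Y \<Longrightarrow> g \<in> carrier G \<Longrightarrow> inc (\<phi> g v) (actY g Y)"
  unfolding inc_def actY_def act_def using phi_V actY_Cyls[unfolded actY_def act_def] by blast

lemma NA_Inl: "NA (Inl v) z \<longleftrightarrow> (\<exists>Y. z = Inr Y \<and> inc v Y)"
  unfolding NA_def by blast

lemma NA_Inr: "NA (Inr Y) z \<longleftrightarrow> (\<exists>v. z = Inl v \<and> inc v Y)"
  unfolding NA_def by blast

lemma NA_sym: "NA x y \<Longrightarrow> NA y x" unfolding NA_def by blast

lemma NA_NV: "NA x y \<Longrightarrow> x \<in> NV \<and> y \<in> NV"
  unfolding NA_def NV_def inc_def by blast

lemma NA_irr: "\<not> NA x x" unfolding NA_def by blast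

lemma new_simple: "simple_graph NV NA"
  unfolding simple_graph_def using NA_sym NA_NV NA_irr by blast

lemma new_ga: "group_action G NV nphi"
proof (rule group_actionI[OF grp])
  show "nphi g \<in> extensional NV" for g unfolding nphi_def extensional_def by simp
  show "nphi g x \<in> NV" if "g \<in> carrier G" "x \<in> NV" for g x
    using that phi_V actY_Cyls unfolding NV_def by (auto simp: nphi_Inl nphi_Inr)
  show "nphi \<one> x = x" if "x \<in> NV" for x
    using that phi_one actY_one unfolding NV_def by (auto simp: nphi_Inl nphi_Inr)
  show "nphi (g \<otimes> h) x = nphi g (nphi h x)" if "g \<in> carrier G" "h \<in> carrier G" "x \<in> NV" for g h x
    using that phi_V actY_Cyls phi_comp actY_comp unfolding NV_def by (auto simp: nphi_Inl nphi_Inr)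
qed

lemma nphi_NA: "g \<in> carrier G \<Longrightarrow> NA x y \<Longrightarrow> NA (nphi g x) (nphi g y)"
proof -
  assume g: "g \<in> carrier G" and "NA x y"
  then obtain v Y where i: "inc v Y" and xy: "x = Inl v \<and> y = Inr Y \<or> x = Inr Y \<and> y = Inl v"
    unfolding NA_def by blast
  have vY: "v \<in> V" "Y \<in> Cyls" using i unfolding inc_def by auto
  have i2: "inc (\<phi> g v) (actY g Y)" using inc_act[OF i g] .
  show ?thesis using xy
  proof
    assume "x = Inl v \<and> y = Inr Y"
    then show ?thesis using i2 vY unfolding NA_def by (simp add: nphi_Inl nphi_Inr)
  next
    assume "x = Inr Y \<and> y = Inl v"
    then show ?thesis using i2 vY unfolding NA_def by (simp add: nphi_Inl nphi_Inr)
  qed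
qed

lemma new_graph_action: "graph_action G NV NA nphi"
  unfolding graph_action_def using new_ga nphi_NA by blast

lemma new_noinv: "without_inversions G NA nphi"
  unfolding without_inversions_def NA_def inc_def by (auto simp: nphi_Inl nphi_Inr)

lemma stabY_small:
  assumes Y: "Y \<in> Cyls" and nb: "\<not> big e" and e: "e \<in> Y"
  shows "{g \<in> carrier G. actY g Y = Y} \<subseteq> st e"
proof -
  have Ye: "Y = cyl e" using Cyls_mem Y e by blast
  have "e \<in> Ed" using Cyls_Ed Y e by blast
  then show ?thesis using stabY nb Ye by blast
qed

lemma stabY_big:
  assumes Y: "Y \<in> Cyls" and b: "big e" and e: "e \<in> Y"
  shows "{g \<in> carrier G. actY g Y = Y} \<subseteq> Qof e"
proof -
  have Ye: "Y = cyl e" using Cyls_mem Y e by blast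
  have "e \<in> Ed" using Cyls_Ed Y e by blast
  then show ?thesis using stabY b Ye by blast
qed

lemma new_nontrivial: "nontrivial_action G NV nphi"
  unfolding nontrivial_action_def
proof
  assume "\<exists>x\<in>NV. \<forall>g\<in>carrier G. nphi g x = x"
  then obtain x where x: "x \<in> NV" and fx: "\<And>g. g \<in> carrier G \<Longrightarrow> nphi g x = x" by blast
  show False
  proof (cases x)
    case (Inl v)
    then have "v \<in> V" using x unfolding NV_def by auto
    then have "\<forall>g\<in>carrier G. \<phi> g v = v" using fx Inl by (simp add: nphi_Inl)
    then show False using ntr \<open>v \<in> V\<close> unfolding nontrivial_action_def by blast
  next
    case (Inr Y)
    then have Y: "Y \<in> Cyls" using x unfolding NV_def by auto
    then obtain e where e: "e \<in> Y" using Cyls_ne by blast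
    have all: "carrier G \<subseteq> {g \<in> carrier G. actY g Y = Y}"
      using fx Inr Y by (auto simp: nphi_Inr)
    show False
    proof (cases "big e")
      case True
      then have sub: "carrier G \<subseteq> Qof e" using all stabY_big[OF Y True e] by blast
      have eE: "e \<in> Ed" using Cyls_Ed Y e by blast
      obtain h P where hP: "h \<in> carrier G" "P \<in> PP" "Qof e = conjg G h P"
        using Qof[OF eE] by (meson CJ_E)
      have Pc: "P \<subseteq> carrier G" using sgP[OF hP(2)] subgroup.subset by metis
      have ih: "inv h \<in> carrier G" using hP(1) by simp
      have "conjg G (inv h) (carrier G) \<subseteq> conjg G (inv h) (conjg G h P)"
        using conjg_mono sub hP(3) by metis
      then have "carrier G \<subseteq> P" using conjg_carrier[OF ih] conjg_inv_cancel[OF hP(1) Pc] by simp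
      then show False using neP[OF hP(2)] Pc by blast
    next
      case False
      then have sub: "carrier G \<subseteq> st e" using all stabY_small[OF Y False e] by blast
      have eE: "e \<in> Ed" using Cyls_Ed Y e by blast
      then obtain u v where uv: "Adj u v" "e = {u, v}" using Ed_iff by blast
      have "\<forall>g\<in>carrier G. \<phi> g u = u" using sub uv unfolding st_def pstab_def by blast
      then show False using ntr adjV[OF uv(1)] unfolding nontrivial_action_def by blast
    qed
  qed
qed

lemma new_over_parabolic: "over_parabolic G PP NA nphi"
  unfolding over_parabolic_def
proof (intro allI impI)
  fix x y assume "NA x y"
  then obtain v Y where inc: "inc v Y" and xy: "{x, y} = {Inl v, Inr Y}"
    unfolding NA_def by blast
  have Y: "Y \<in> Cyls" using inc unfolding inc_def by blast
  obtain e where e: "e \<in> Y" using Cyls_ne Y by blast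
  have eE: "e \<in> Ed" using Cyls_Ed Y e by blast
  have sub: "pstab G nphi {x, y} \<subseteq> {g \<in> carrier G. actY g Y = Y}"
    unfolding xy pstab_def using Y by (auto simp: nphi_Inr)
  show "parabolic G PP (pstab G nphi {x, y})"
  proof (cases "big e")
    case True
    then have "pstab G nphi {x, y} \<subseteq> Qof e" using sub stabY_big[OF Y True e] by blast
    moreover have "parabolic G PP (Qof e)"
      using Qof[OF eE] unfolding parabolic_def CJ_def by blast
    ultimately show ?thesis using parabolic_mono by blast
  next
    case False
    then have "pstab G nphi {x, y} \<subseteq> st e" using sub stabY_small[OF Y False e] by blast
    moreover obtain u w where "Adj u w" "e = {u, w}" using eE Ed_iff by blast
    then have "parabolic G PP (st e)" using ovp unfolding over_parabolic_def st_def by blast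
    ultimately show ?thesis using parabolic_mono by blast
  qed
qed

lemma stab2_small:
  assumes i1: "inc v Y" and i2: "inc v Y'" and ne: "Y \<noteq> Y'"
  shows "small C {g \<in> carrier G. actY g Y = Y \<and> actY g Y' = Y'}"
proof -
  obtain e where e: "e \<in> Y" "v \<in> e" and Y: "Y \<in> Cyls" using i1 unfolding inc_def by blast
  obtain e' where e': "e' \<in> Y'" "v \<in> e'" and Y': "Y' \<in> Cyls" using i2 unfolding inc_def by blast
  have eE: "e \<in> Ed" using Cyls_Ed Y e by blast
  have eE': "e' \<in> Ed" using Cyls_Ed Y' e' by blast
  let ?K = "{g \<in> carrier G. actY g Y = Y \<and> actY g Y' = Y'}"
  show ?thesis
  proof (cases "big e")
    case False
    then have "?K \<subseteq> st e" using stabY_small[OF Y False e(1)] by blast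
    then show ?thesis using False small_subset unfolding big_def by blast
  next
    case b: True
    show ?thesis
    proof (cases "big e'")
      case False
      then have "?K \<subseteq> st e'" using stabY_small[OF Y' False e'(1)] by blast
      then show ?thesis using False small_subset unfolding big_def by blast
    next
      case b': True
      have "Qof e \<noteq> Qof e'"
      proof
        assume "Qof e = Qof e'"
        then have "Sr e e'" unfolding Sr_def using eE eE' e e' b b' by blast
        then have "cyl e = cyl e'" using cyl_eq by blast
        then show False using ne Cyls_mem Y Y' e e' by metis
      qed
      then have "small C (Qof e \<inter> Qof e')" using CJ_uniq Qof eE eE' by blast
      moreover have "?K \<subseteq> Qof e \<inter> Qof e'"
        using stabY_big[OF Y b e(1)] stabY_big[OF Y' b' e'(1)] by blast
      ultimately show ?thesis using small_subset by blast
    qed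
  qed
qed

lemma new_acyl: "acylindrical G NA nphi 2 C"
  unfolding acylindrical_def
proof (intro allI impI)
  fix xs assume a: "gwalk NA xs \<and> distinct xs \<and> 2 + 2 \<le> length xs"
  then have w: "wk NA xs" and d: "distinct xs" and len: "4 \<le> length xs"
    using gwalk_wk by auto
  have l1: "Suc 0 < length xs" "Suc (Suc 0) < length xs" "Suc (Suc (Suc 0)) < length xs"
    using len by auto
  have n01: "NA (xs ! 0) (xs ! Suc 0)" using wk_nth[OF w l1(1)] by simp
  have n12: "NA (xs ! Suc 0) (xs ! Suc (Suc 0))" using wk_nth[OF w l1(2)] .
  have n23: "NA (xs ! Suc (Suc 0)) (xs ! Suc (Suc (Suc 0)))" using wk_nth[OF w l1(3)] .
  have "\<exists>i v Y Y'. Suc (Suc i) < length xs \<and> xs ! i = Inr Y \<and> xs ! Suc i = Inl v \<and>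
          xs ! Suc (Suc i) = Inr Y' \<and> inc v Y \<and> inc v Y'"
  proof (cases "xs ! 0")
    case (Inl u)
    then obtain Y where Y: "xs ! Suc 0 = Inr Y" using n01 NA_Inl by metis
    then obtain v where v: "xs ! Suc (Suc 0) = Inl v" "inc v Y" using n12 NA_Inr by metis
    then obtain Y' where Y': "xs ! Suc (Suc (Suc 0)) = Inr Y'" "inc v Y'" using n23 NA_Inl by metis
    show ?thesis using Y v Y' l1(3) by blast
  next
    case (Inr Y)
    then obtain v where v: "xs ! Suc 0 = Inl v" "inc v Y" using n01 NA_Inr by metis
    then obtain Y' where Y': "xs ! Suc (Suc 0) = Inr Y'" "inc v Y'" using n12 NA_Inl by metis
    show ?thesis using Inr v Y' l1(2) by blast
  qed
  then obtain i v Y Y' where i: "Suc (Suc i) < length xs" "xs ! i = Inr Y" "xs ! Suc i = Inl v"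
      "xs ! Suc (Suc i) = Inr Y'" "inc v Y" "inc v Y'" by blast
  have ne: "Y \<noteq> Y'"
  proof
    assume "Y = Y'"
    then have "xs ! i = xs ! Suc (Suc i)" using i by simp
    then show False using nth_eq_iff_index_eq[OF d, of i "Suc (Suc i)"] i(1) by simp
  qed
  have "xs ! i \<in> set xs" "xs ! Suc (Suc i) \<in> set xs" using i(1) by simp_all
  then have inY: "Inr Y \<in> set xs" "Inr Y' \<in> set xs" using i(2,4) by simp_all
  have YC: "Y \<in> Cyls" "Y' \<in> Cyls" using i unfolding inc_def by auto
  have "pstab G nphi (set xs) \<subseteq> {g \<in> carrier G. actY g Y = Y \<and> actY g Y' = Y'}"
    unfolding pstab_def using inY YC by (auto simp: nphi_Inr)
  then have "small C (pstab G nphi (set xs))" using stab2_small[OF i(5,6) ne] small_subset by blast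
  then show "finite (pstab G nphi (set xs)) \<and> card (pstab G nphi (set xs)) \<le> C"
    unfolding small_def .
qed

end


lemma wk_rtranclp: "wk R xs \<Longrightarrow> R\<^sup>*\<^sup>* (hd xs) (last xs)"
proof (induction R xs rule: wk.induct)
  case (3 R x y r)
  then have "R x y" "R\<^sup>*\<^sup>* y (last (y # r))" by auto
  then show ?case by (simp add: converse_rtranclp_into_rtranclp)
qed auto

lemma wk_snoc: "wk R xs \<Longrightarrow> R (last xs) x \<Longrightarrow> wk R (xs @ [x])"
proof (induction R xs rule: wk.induct)
  case (3 R a b r)
  then show ?case by simp
qed auto

lemma rtranclp_sym:
  assumes s: "\<And>x y. R x y \<Longrightarrow> R y x"
  shows "R\<^sup>*\<^sup>* a b \<Longrightarrow> R\<^sup>*\<^sup>* b a"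
proof (induction rule: rtranclp_induct)
  case (step y z)
  then show ?case using s by (meson converse_rtranclp_into_rtranclp)
qed simp

lemma cycle_rotate1: "cycle_list R c \<Longrightarrow> cycle_list R (rotate1 c)"
proof -
  assume a: "cycle_list R c"
  then obtain x xs where c: "c = x # xs" unfolding cycle_list_def by (cases c) auto
  have len: "length xs \<ge> 2" using a c unfolding cycle_list_def by simp
  then have ne: "xs \<noteq> []" by auto
  have w: "wk R (x # xs)" using a c unfolding cycle_list_def gwalk_wk by simp
  have "wk R xs" using wk_Cons[OF w ne] .
  moreover have "R (last xs) x" using a c ne unfolding cycle_list_def by simp
  ultimately have "wk R (xs @ [x])" by (rule wk_snoc)
  moreover have "R x (hd xs)" using w ne by (cases xs) auto
  ultimately show ?thesis using a c ne unfolding cycle_list_def gwalk_wk by simp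
qed

context cylsetup
begin

lemma adj_conn: "Adj u v \<Longrightarrow> NA\<^sup>*\<^sup>* (Inl u) (Inl v)"
proof -
  assume a: "Adj u v"
  have e: "{u, v} \<in> Ed" using a Ed_iff by blast
  define Y where "Y = cyl {u, v}"
  have Y: "Y \<in> Cyls" unfolding Y_def Cyls_def using e by blast
  have "{u, v} \<in> Y" unfolding Y_def by (rule cyl_self)
  then have "inc u Y" "inc v Y" using Y adjV[OF a] unfolding inc_def by auto
  then have "NA (Inl u) (Inr Y)" "NA (Inr Y) (Inl v)" unfolding NA_def by auto
  then show ?thesis by (meson converse_rtranclp_into_rtranclp r_into_rtranclp)
qed

lemma adjs_conn: "Adj\<^sup>*\<^sup>* u v \<Longrightarrow> NA\<^sup>*\<^sup>* (Inl u) (Inl v)"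
proof (induction rule: rtranclp_induct)
  case (step y z)
  then show ?case using adj_conn by (meson rtranclp_trans)
qed simp

lemma V_conn: "u \<in> V \<Longrightarrow> v \<in> V \<Longrightarrow> NA\<^sup>*\<^sup>* (Inl u) (Inl v)"
proof -
  assume "u \<in> V" "v \<in> V"
  then obtain xs where "gwalk Adj xs" "hd xs = u" "last xs = v"
    using tree unfolding is_tree_def graph_connected_def by blast
  then show ?thesis using wk_rtranclp adjs_conn gwalk_wk by metis
qed

lemma NV_to_V: "x \<in> NV \<Longrightarrow> \<exists>u\<in>V. NA\<^sup>*\<^sup>* x (Inl u)"
proof -
  assume x: "x \<in> NV"
  show ?thesis
  proof (cases x)
    case (Inl u) then show ?thesis using x unfolding NV_def by auto
  next
    case (Inr Y)
    then have Y: "Y \<in> Cyls" using x unfolding NV_def by auto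
    then obtain e where e: "e \<in> Y" using Cyls_ne by blast
    then obtain a b where ab: "Adj a b" "e = {a, b}" using Cyls_Ed Y Ed_iff by blast
    then have "inc a Y" using Y e adjV unfolding inc_def by blast
    then have "NA x (Inl a)" using Inr unfolding NA_def by blast
    then show ?thesis using adjV ab by blast
  qed
qed

lemma new_connected: "graph_connected NV NA"
  unfolding graph_connected_def
proof (intro ballI)
  fix x y assume x: "x \<in> NV" and y: "y \<in> NV"
  obtain u where u: "u \<in> V" "NA\<^sup>*\<^sup>* x (Inl u)" using NV_to_V x by blast
  obtain v where v: "v \<in> V" "NA\<^sup>*\<^sup>* y (Inl v)" using NV_to_V y by blast
  have "NA\<^sup>*\<^sup>* (Inl v) y" using rtranclp_sym[OF NA_sym v(2)] .
  then have "NA\<^sup>*\<^sup>* x y" using u v V_conn by (meson rtranclp_trans)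
  then obtain ws where "wk NA ws" "hd ws = x" "last ws = y" using rtranclp_wk by metis
  then show "\<exists>xs. gwalk NA xs \<and> hd xs = x \<and> last xs = y" using gwalk_wk by blast
qed

lemma edge_reach:
  assumes e: "e \<in> Ed" "e \<in> S" and w: "w \<in> e" and z: "z \<in> e"
  shows "(\<lambda>u v. Adj u v \<and> {u, v} \<in> S)\<^sup>*\<^sup>* w z"
proof -
  obtain p q where pq: "Adj p q" "e = {p, q}" using e Ed_iff by blast
  show ?thesis
  proof (cases "w = z")
    case True then show ?thesis by simp
  next
    case False
    then have "(w = p \<and> z = q) \<or> (w = q \<and> z = p)" using w z pq by auto
    then have "Adj w z \<and> {w, z} \<in> S" using pq e adj_sym by (auto simp: insert_commute)
    then show ?thesis by (simp add: r_into_rtranclp)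
  qed
qed

lemma cyl_reach_aux:
  "Sr\<^sup>*\<^sup>* e1 e2 \<Longrightarrow> e1 \<in> Ed \<Longrightarrow> x \<in> e1 \<Longrightarrow> z \<in> e2 \<Longrightarrow>
   (\<lambda>u v. Adj u v \<and> {u, v} \<in> cyl e1)\<^sup>*\<^sup>* x z"
proof (induction arbitrary: z rule: rtranclp_induct)
  case base
  then show ?case using edge_reach cyl_self by blast
next
  case (step y e2)
  have "y \<inter> e2 \<noteq> {}" using step(2) unfolding Sr_def by blast
  then obtain w where w: "w \<in> y" "w \<in> e2" by blast
  have 1: "(\<lambda>u v. Adj u v \<and> {u, v} \<in> cyl e1)\<^sup>*\<^sup>* x w" using step w by blast
  have "e2 \<in> cyl e1" using step(1,2) unfolding cyl_def by simp
  moreover have "e2 \<in> Ed" using step(2) unfolding Sr_def by blast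
  ultimately have 2: "(\<lambda>u v. Adj u v \<and> {u, v} \<in> cyl e1)\<^sup>*\<^sup>* w z" using edge_reach w step(6) by blast
  show ?case using 1 2 by (rule rtranclp_trans)
qed

lemma cyl_reach:
  assumes "inc x Y" "inc z Y"
  shows "(\<lambda>u v. Adj u v \<and> {u, v} \<in> Y)\<^sup>*\<^sup>* x z"
proof -
  obtain e1 where e1: "e1 \<in> Y" "x \<in> e1" and Y: "Y \<in> Cyls" using assms(1) unfolding inc_def by blast
  obtain e2 where e2: "e2 \<in> Y" "z \<in> e2" using assms(2) unfolding inc_def by blast
  have Ye: "Y = cyl e1" using Cyls_mem Y e1 by blast
  then have "Sr\<^sup>*\<^sup>* e1 e2" using e2 unfolding cyl_def by blast
  moreover have "e1 \<in> Ed" using Cyls_Ed Y e1 by blast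
  ultimately show ?thesis using cyl_reach_aux e1 e2 Ye by blast
qed

fun pts :: "nat + nat set set \<Rightarrow> nat set" where
  "pts (Inl x) = {x}"
| "pts (Inr Y) = {v. inc v Y}"

lemma pts_reach:
  assumes Y: "Y \<in> Cyls" and n: "n \<noteq> Inr Y" and x: "x \<in> pts n" and z: "z \<in> pts n"
  shows "(\<lambda>u v. Adj u v \<and> {u, v} \<notin> Y)\<^sup>*\<^sup>* x z"
proof (cases n)
  case (Inl v) then show ?thesis using x z by simp
next
  case (Inr Y')
  then have i: "inc x Y'" "inc z Y'" and ne: "Y' \<noteq> Y" using x z n by auto
  have Y': "Y' \<in> Cyls" using i unfolding inc_def by blast
  have r: "(\<lambda>u v. Adj u v \<and> {u, v} \<in> Y')\<^sup>*\<^sup>* x z" using cyl_reach[OF i] .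
  have imp: "\<And>u v. Adj u v \<and> {u, v} \<in> Y' \<longrightarrow> Adj u v \<and> {u, v} \<notin> Y"
    using Cyls_disj[OF Y Y'] ne by blast
  show ?thesis by (rule mono_rtranclp[OF imp, rule_format, OF r])
qed

lemma proj:
  assumes Y: "Y \<in> Cyls"
  shows "wk NA ws \<Longrightarrow> Inr Y \<notin> set ws \<Longrightarrow> x \<in> pts (hd ws) \<Longrightarrow> z \<in> pts (last ws) \<Longrightarrow>
    (\<lambda>u v. Adj u v \<and> {u, v} \<notin> Y)\<^sup>*\<^sup>* x z"
proof (induction ws arbitrary: x)
  case Nil then show ?case by simp
next
  case (Cons n ws)
  show ?case
  proof (cases "ws = []")
    case True
    have "n \<noteq> Inr Y" using Cons.prems(2) by auto
    then show ?thesis using pts_reach[OF Y, of n x z] Cons.prems(3,4) True by simp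
  next
    case False
    have na: "NA n (hd ws)" using Cons(2) False by (cases ws) auto
    have "\<exists>w. w \<in> pts n \<and> w \<in> pts (hd ws)"
    proof (cases n)
      case (Inl v)
      then obtain Y' where "hd ws = Inr Y'" "inc v Y'" using na NA_Inl by metis
      then show ?thesis using Inl by auto
    next
      case (Inr Y')
      then obtain v where "hd ws = Inl v" "inc v Y'" using na NA_Inr by metis
      then show ?thesis using Inr by auto
    qed
    then obtain w where w: "w \<in> pts n" "w \<in> pts (hd ws)" by blast
    have nY: "n \<noteq> Inr Y" using Cons.prems(2) by auto
    have "x \<in> pts n" using Cons.prems(3) by simp
    then have 1: "(\<lambda>u v. Adj u v \<and> {u, v} \<notin> Y)\<^sup>*\<^sup>* x w"
      using pts_reach[OF Y nY _ w(1)] by blast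
    have 2: "(\<lambda>u v. Adj u v \<and> {u, v} \<notin> Y)\<^sup>*\<^sup>* w z"
    proof (rule Cons.IH[OF wk_Cons[OF Cons.prems(1) False] _ w(2)])
      show "Inr Y \<notin> set ws" using Cons.prems(2) by simp
      show "z \<in> pts (last ws)" using Cons.prems(4) False by simp
    qed
    show ?thesis using 1 2 by (rule rtranclp_trans)
  qed
qed

lemma acycT: "acyc Adj"
  using tree unfolding is_tree_def acyc_def by blast

lemma new_acyc: "\<not> (\<exists>c. cycle_list NA c)"
proof
  assume "\<exists>c. cycle_list NA c"
  then obtain c0 where c0: "cycle_list NA c0" by blast
  have "\<exists>c a. cycle_list NA c \<and> hd c = Inl a"
  proof (cases "hd c0")
    case (Inl a) then show ?thesis using c0 by blast
  next
    case (Inr Y)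
    obtain x xs where c0x: "c0 = x # xs" using c0 unfolding cycle_list_def by (cases c0) auto
    have ne: "xs \<noteq> []" using c0 c0x unfolding cycle_list_def by auto
    have "NA x (hd xs)" using c0 c0x ne unfolding cycle_list_def gwalk_wk by (cases xs) auto
    then obtain a where "hd xs = Inl a" using Inr c0x NA_Inr by auto
    moreover have "cycle_list NA (rotate1 c0)" using cycle_rotate1[OF c0] .
    moreover have "hd (rotate1 c0) = hd xs" using c0x ne by (cases xs) auto
    ultimately show ?thesis by metis
  qed
  then obtain c a where c: "cycle_list NA c" and ha: "hd c = Inl a" by blast
  obtain r1 where r1: "c = Inl a # r1" using c ha unfolding cycle_list_def by (cases c) auto
  have w: "wk NA c" using c unfolding cycle_list_def gwalk_wk by blast
  have "length r1 \<ge> 2" using c r1 unfolding cycle_list_def by simp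
  then obtain y1 z1 rest where r1e: "r1 = y1 # z1 # rest"
    by (metis One_nat_def Suc_1 Suc_le_length_iff)
  have "NA (Inl a) y1" using w r1 r1e by simp
  then obtain Y where Y1: "y1 = Inr Y" "inc a Y" using NA_Inl by metis
  have "NA y1 z1" using w r1 r1e by simp
  then obtain b where b: "z1 = Inl b" "inc b Y" using Y1 NA_Inr by metis
  have YC: "Y \<in> Cyls" using Y1 unfolding inc_def by blast
  have d: "distinct c" using c unfolding cycle_list_def by blast
  have ab: "a \<noteq> b" using d r1 r1e b by auto
  define ws where "ws = Inl b # rest @ [Inl a]"
  have w2: "wk NA (Inl b # rest)" using w r1 r1e b by simp
  have "NA (last c) (hd c)" using c unfolding cycle_list_def by blast
  then have "NA (last (Inl b # rest)) (Inl a)" using r1 r1e b by simp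
  then have wws: "wk NA ws" unfolding ws_def using wk_snoc[OF w2] by simp
  have nY: "Inr Y \<notin> set ws" unfolding ws_def using d r1 r1e Y1 by auto
  have RN: "(\<lambda>u v. Adj u v \<and> {u, v} \<notin> Y)\<^sup>*\<^sup>* b a"
    using proj[OF YC wws nY] unfolding ws_def by simp
  have RY: "(\<lambda>u v. Adj u v \<and> {u, v} \<in> Y)\<^sup>*\<^sup>* a b" using cyl_reach Y1 b by blast
  show False
  proof (rule tree_no_two_paths[where R = Adj and A = "\<lambda>u v. {u, v} \<in> Y" and a = a and b = b])
    show "acyc Adj" by (rule acycT)
    show "\<not> Adj x x" for x by (rule adj_irr)
    show "Adj x y \<Longrightarrow> Adj y x" for x y by (rule adj_sym)
    show "(\<lambda>u v. Adj u v \<and> {u, v} \<in> Y)\<^sup>*\<^sup>* a b" by (rule RY)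
    show "(\<lambda>u v. Adj u v \<and> \<not> {u, v} \<in> Y)\<^sup>*\<^sup>* b a" using RN by simp
    show "{u, v} \<in> Y \<Longrightarrow> {v, u} \<in> Y" for u v by (simp add: insert_commute)
    show "a \<noteq> b" by (rule ab)
  qed
qed

lemma new_tree: "is_tree NV NA"
  unfolding is_tree_def
proof (intro conjI)
  show "simple_graph NV NA" by (rule new_simple)
  show "NV \<noteq> {}" using tree unfolding is_tree_def NV_def by blast
  show "graph_connected NV NA" by (rule new_connected)
  show "\<not> (\<exists>c. cycle_list NA c)" by (rule new_acyc)
qed

end


context cylsetup
begin

lemma F1_cover:
  assumes fin: "finite F0"
    and cov: "\<And>u v. Adj u v \<Longrightarrow> \<exists>(a, b)\<in>F0. \<exists>g\<in>carrier G. \<phi> g a = u \<and> \<phi> g b = v"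
    and uv: "Adj u v" "u \<noteq> undefined" "v \<noteq> undefined"
  shows "\<exists>p\<in>{p \<in> F0. Adj (fst p) (snd p)}. \<exists>g\<in>carrier G. \<phi> g (fst p) = u \<and> \<phi> g (snd p) = v"
proof -
  obtain a b g where ab: "(a, b) \<in> F0" and g: "g \<in> carrier G" and ga: "\<phi> g a = u" and gb: "\<phi> g b = v"
    using cov[OF uv(1)] by blast
  have aV: "a \<in> V"
  proof (rule ccontr)
    assume "a \<notin> V"
    then have "\<phi> g a = undefined" using extensional_arb[OF phi_ext[OF g]] by blast
    then show False using ga uv(2) by simp
  qed
  have bV: "b \<in> V"
  proof (rule ccontr)
    assume "b \<notin> V"
    then have "\<phi> g b = undefined" using extensional_arb[OF phi_ext[OF g]] by blast
    then show False using gb uv(3) by simp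
  qed
  have ig: "inv g \<in> carrier G" using g by simp
  have "Adj (\<phi> (inv g) u) (\<phi> (inv g) v)" using adj_act[OF ig uv(1)] .
  then have "Adj a b" using phi_inv[OF g aV] phi_inv[OF g bV] ga gb by simp
  then have "(a, b) \<in> {p \<in> F0. Adj (fst p) (snd p)}" using ab by simp
  moreover have "\<phi> g (fst (a, b)) = u \<and> \<phi> g (snd (a, b)) = v" using ga gb by simp
  ultimately show ?thesis using g by blast
qed

lemma genuine_cover:
  "\<exists>F. finite F \<and> (\<forall>p\<in>F. Adj (fst p) (snd p)) \<and>
     (\<forall>u v. Adj u v \<longrightarrow> (\<exists>p\<in>F. \<exists>g\<in>carrier G. \<phi> g (fst p) = u \<and> \<phi> g (snd p) = v))"
proof -
  obtain F0 where fin: "finite F0"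
    and cov: "\<And>u v. Adj u v \<Longrightarrow> \<exists>(a, b)\<in>F0. \<exists>g\<in>carrier G. \<phi> g a = u \<and> \<phi> g b = v"
    using spl unfolding splitting_def finitely_many_edge_orbits_def by blast
  define c :: nat where "c = undefined"
  define F1 where "F1 = {p \<in> F0. Adj (fst p) (snd p)}"
  define g0 where "g0 = (SOME g. g \<in> carrier G \<and> \<phi> g c \<noteq> c)"
  define d where "d = \<phi> (inv g0) c"
  define F where "F = F1 \<union> {p \<in> {(c, d), (d, c)}. Adj (fst p) (snd p)}"
  have k1: "\<And>u v. Adj u v \<Longrightarrow> u \<noteq> c \<Longrightarrow> v \<noteq> c \<Longrightarrow>
      \<exists>p\<in>F1. \<exists>g\<in>carrier G. \<phi> g (fst p) = u \<and> \<phi> g (snd p) = v"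
    unfolding F1_def c_def using F1_cover[OF fin cov] by blast
  have g0: "c \<in> V \<Longrightarrow> g0 \<in> carrier G \<and> \<phi> g0 c \<noteq> c"
  proof -
    assume "c \<in> V"
    then have "\<exists>g. g \<in> carrier G \<and> \<phi> g c \<noteq> c" using ntr unfolding nontrivial_action_def by blast
    then show ?thesis unfolding g0_def by (rule someI_ex)
  qed
  have F1F: "F1 \<subseteq> F" unfolding F_def by blast
  have main: "\<exists>p\<in>F. \<exists>g\<in>carrier G. \<phi> g (fst p) = u \<and> \<phi> g (snd p) = v" if uv: "Adj u v" for u v
  proof -
    have uV: "u \<in> V" and vV: "v \<in> V" using adjV uv by auto
    have "u \<noteq> v" using adj_irr uv by blast
    show ?thesis
    proof (cases "u = c \<or> v = c")
      case False
      then show ?thesis using k1 uv F1F by blast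
    next
      case True
      have cV: "c \<in> V" using True uV vV by blast
      have g0c: "g0 \<in> carrier G" "\<phi> g0 c \<noteq> c" using g0[OF cV] by auto
      have ig0: "inv g0 \<in> carrier G" using g0c by simp
      have dV: "d \<in> V" unfolding d_def using phi_V[OF ig0 cV] .
      show ?thesis
      proof (cases "(u = c \<and> v = d) \<or> (u = d \<and> v = c)")
        case True
        then have "(u, v) \<in> F" unfolding F_def using uv by auto
        moreover have "\<phi> \<one> u = u" "\<phi> \<one> v = v" using phi_one uV vV by auto
        ultimately show ?thesis by force
      next
        case False
        define u' where "u' = \<phi> g0 u"
        define v' where "v' = \<phi> g0 v"
        have a': "Adj u' v'" unfolding u'_def v'_def using adj_act[OF g0c(1) uv] .
        have u'c: "u' \<noteq> c"
        proof
          assume "u' = c"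
          then have "u = d" unfolding u'_def d_def using phi_inv[OF g0c(1) uV] by metis
          moreover have "v = c"
          proof -
            have "u \<noteq> c" using \<open>u = d\<close> g0c(2) d_def phi_inv'[OF g0c(1) cV] by metis
            then show ?thesis using \<open>u = c \<or> v = c\<close> by blast
          qed
          ultimately show False using False by blast
        qed
        have v'c: "v' \<noteq> c"
        proof
          assume "v' = c"
          then have "v = d" unfolding v'_def d_def using phi_inv[OF g0c(1) vV] by metis
          moreover have "u = c"
          proof -
            have "v \<noteq> c" using \<open>v = d\<close> g0c(2) d_def phi_inv'[OF g0c(1) cV] by metis
            then show ?thesis using \<open>u = c \<or> v = c\<close> by blast
          qed
          ultimately show False using False by blast
        qed
        obtain p g where p: "p \<in> F1" and g: "g \<in> carrier G" and gp: "\<phi> g (fst p) = u'" "\<phi> g (snd p) = v'"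
          using k1[OF a' u'c v'c] by blast
        have pA: "Adj (fst p) (snd p)" using p unfolding F1_def by blast
        have pV: "fst p \<in> V" "snd p \<in> V" using adjV[OF pA] by auto
        have h: "inv g0 \<otimes> g \<in> carrier G" using ig0 g by simp
        have "\<phi> (inv g0 \<otimes> g) (fst p) = u"
          using phi_comp[OF ig0 g pV(1)] gp(1) phi_inv[OF g0c(1) uV] unfolding u'_def by simp
        moreover have "\<phi> (inv g0 \<otimes> g) (snd p) = v"
          using phi_comp[OF ig0 g pV(2)] gp(2) phi_inv[OF g0c(1) vV] unfolding v'_def by simp
        ultimately show ?thesis using p F1F h by blast
      qed
    qed
  qed
  have "finite F" unfolding F_def F1_def using fin by simp
  moreover have "\<forall>p\<in>F. Adj (fst p) (snd p)" unfolding F_def F1_def by auto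
  ultimately show ?thesis using main by blast
qed

lemma new_cover:
  assumes inc: "inc v Y" and F: "\<forall>p\<in>F. Adj (fst p) (snd p)"
    and cov: "\<forall>u v. Adj u v \<longrightarrow> (\<exists>p\<in>F. \<exists>g\<in>carrier G. \<phi> g (fst p) = u \<and> \<phi> g (snd p) = v)"
  shows "\<exists>p\<in>F. \<exists>g\<in>carrier G. nphi g (Inl (fst p)) = Inl v \<and> nphi g (Inr (cyl {fst p, snd p})) = Inr Y"
proof -
  obtain e where e: "e \<in> Y" "v \<in> e" and Y: "Y \<in> Cyls" and vV: "v \<in> V" using inc unfolding inc_def by blast
  have eE: "e \<in> Ed" using Cyls_Ed Y e by blast
  obtain p0 q0 where pq: "Adj p0 q0" "e = {p0, q0}" using eE Ed_iff by blast
  obtain w where w: "Adj v w" "e = {v, w}"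
  proof (cases "v = p0")
    case True then show ?thesis using that pq by blast
  next
    case False
    then have "v = q0" using e pq by blast
    then show ?thesis using that pq adj_sym by (auto simp: insert_commute)
  qed
  obtain p g where p: "p \<in> F" and g: "g \<in> carrier G" and gp: "\<phi> g (fst p) = v" "\<phi> g (snd p) = w"
    using cov w(1) by blast
  have pA: "Adj (fst p) (snd p)" using F p by blast
  have pE: "{fst p, snd p} \<in> Ed" using pA Ed_iff by blast
  have aV: "fst p \<in> V" using adjV pA by blast
  have "act g {fst p, snd p} = e" unfolding act_def using gp w by auto
  then have "actY g (cyl {fst p, snd p}) = cyl e" using actY_cyl[OF pE g] by simp
  also have "cyl e = Y" using Cyls_mem[OF Y e(1)] by simp
  finally have 1: "nphi g (Inr (cyl {fst p, snd p})) = Inr Y"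
    using nphi_Inr pE unfolding Cyls_def by auto
  have 2: "nphi g (Inl (fst p)) = Inl v" using nphi_Inl[OF aV] gp by simp
  show ?thesis using p g 1 2 by blast
qed

lemma new_feo:
  "\<exists>FN. finite FN \<and> (\<forall>p\<in>FN. fst p \<in> NV \<and> snd p \<in> NV) \<and>
     (\<forall>x y. NA x y \<longrightarrow> (\<exists>p\<in>FN. \<exists>g\<in>carrier G. nphi g (fst p) = x \<and> nphi g (snd p) = y))"
proof -
  obtain F where fin: "finite F" and FA: "\<forall>p\<in>F. Adj (fst p) (snd p)"
    and cov: "\<forall>u v. Adj u v \<longrightarrow> (\<exists>p\<in>F. \<exists>g\<in>carrier G. \<phi> g (fst p) = u \<and> \<phi> g (snd p) = v)"
    using genuine_cover by blast
  define f1 where "f1 = (\<lambda>p. (Inl (fst p), Inr (cyl {fst p, snd p})) :: (nat + nat set set) \<times> (nat + nat set set))"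
  define f2 where "f2 = (\<lambda>p. (Inr (cyl {fst p, snd p}), Inl (fst p)) :: (nat + nat set set) \<times> (nat + nat set set))"
  define FN where "FN = f1 ` F \<union> f2 ` F"
  have "finite FN" unfolding FN_def using fin by simp
  moreover have "\<forall>p\<in>FN. fst p \<in> NV \<and> snd p \<in> NV"
  proof
    fix q assume "q \<in> FN"
    then obtain p where p: "p \<in> F" and q: "q = f1 p \<or> q = f2 p" unfolding FN_def by blast
    have pA: "Adj (fst p) (snd p)" using FA p by blast
    have "{fst p, snd p} \<in> Ed" using pA Ed_iff by blast
    then have "cyl {fst p, snd p} \<in> Cyls" unfolding Cyls_def by blast
    moreover have "fst p \<in> V" using adjV pA by blast
    ultimately show "fst q \<in> NV \<and> snd q \<in> NV" using q unfolding f1_def f2_def NV_def by auto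
  qed
  moreover have "\<forall>x y. NA x y \<longrightarrow> (\<exists>p\<in>FN. \<exists>g\<in>carrier G. nphi g (fst p) = x \<and> nphi g (snd p) = y)"
  proof (intro allI impI)
    fix x y assume "NA x y"
    then obtain v Y where i: "inc v Y" and xy: "x = Inl v \<and> y = Inr Y \<or> x = Inr Y \<and> y = Inl v"
      unfolding NA_def by blast
    obtain p g where p: "p \<in> F" and g: "g \<in> carrier G"
      and gp: "nphi g (Inl (fst p)) = Inl v" "nphi g (Inr (cyl {fst p, snd p})) = Inr Y"
      using new_cover[OF i FA cov] by blast
    show "\<exists>p\<in>FN. \<exists>g\<in>carrier G. nphi g (fst p) = x \<and> nphi g (snd p) = y"
      using xy
    proof
      assume "x = Inl v \<and> y = Inr Y"
      moreover have "f1 p \<in> FN" unfolding FN_def using p by blast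
      ultimately show ?thesis using g gp unfolding f1_def by force
    next
      assume "x = Inr Y \<and> y = Inl v"
      moreover have "f2 p \<in> FN" unfolding FN_def using p by blast
      ultimately show ?thesis using g gp unfolding f2_def by force
    qed
  qed
  ultimately show ?thesis by blast
qed

end


lemma wk_set: "wk R xs \<Longrightarrow> 2 \<le> length xs \<Longrightarrow> (\<And>x y. R x y \<Longrightarrow> P x \<and> P y) \<Longrightarrow> \<forall>x\<in>set xs. P x"
proof (induction R xs rule: wk.induct)
  case (3 R x y r)
  show ?case
  proof (cases "r = []")
    case True then show ?thesis using 3 by auto
  next
    case False
    then have "\<forall>x\<in>set (y # r). P x" using 3 by (cases r) auto
    moreover have "P x" using 3 by auto
    ultimately show ?thesis by simp
  qed
qed auto

lemma transport:
  fixes G (structure) and NV :: "'a set" and NA :: "'a \<Rightarrow> 'a \<Rightarrow> bool" and nphi :: "'g \<Rightarrow> 'a \<Rightarrow> 'a"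
    and \<iota> :: "'a \<Rightarrow> nat"
  assumes inj: "inj_on \<iota> NV"
    and tr: "is_tree NV NA"
    and gac: "graph_action G NV NA nphi"
    and ni: "without_inversions G NA nphi"
    and feo: "\<exists>FN. finite FN \<and> (\<forall>p\<in>FN. fst p \<in> NV \<and> snd p \<in> NV) \<and>
       (\<forall>x y. NA x y \<longrightarrow> (\<exists>p\<in>FN. \<exists>g\<in>carrier G. nphi g (fst p) = x \<and> nphi g (snd p) = y))"
    and nt: "nontrivial_action G NV nphi"
    and op: "over_parabolic G PP NA nphi"
    and ac: "acylindrical G NA nphi 2 C"
  shows "\<exists>V Adj \<phi>. splitting G V Adj \<phi> \<and> nontrivial_action G V \<phi> \<and> over_parabolic G PP Adj \<phi> \<and>
           acylindrical G Adj \<phi> 2 C"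
proof -
  have ga: "group_action G NV nphi" using gac unfolding graph_action_def by blast
  have grpG: "group G" using ga group_action.group_hom group_hom.axioms(1) by blast
  interpret group G by (rule grpG)
  have sg: "simple_graph NV NA" using tr unfolding is_tree_def by blast
  have NAV: "NA a b \<Longrightarrow> a \<in> NV \<and> b \<in> NV" for a b using sg unfolding simple_graph_def by blast
  have nphiV: "g \<in> carrier G \<Longrightarrow> a \<in> NV \<Longrightarrow> nphi g a \<in> NV" for g a
    using group_action.element_image[OF ga] by blast
  have nphiA: "g \<in> carrier G \<Longrightarrow> NA a b \<Longrightarrow> NA (nphi g a) (nphi g b)" for g a b
    using gac unfolding graph_action_def by blast
  define W where "W = \<iota> ` NV"
  define j where "j = the_inv_into NV \<iota>"
  define AW where "AW x y \<longleftrightarrow> (\<exists>a b. NA a b \<and> x = \<iota> a \<and> y = \<iota> b)" for x y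
  define \<psi> where "\<psi> g x = (if x \<in> W then \<iota> (nphi g (j x)) else undefined)" for g x
  have ji: "a \<in> NV \<Longrightarrow> j (\<iota> a) = a" for a unfolding j_def using the_inv_into_f_f[OF inj] by blast
  have ij: "x \<in> W \<Longrightarrow> \<iota> (j x) = x" for x unfolding j_def W_def using f_the_inv_into_f[OF inj] by blast
  have jV: "x \<in> W \<Longrightarrow> j x \<in> NV" for x unfolding j_def W_def using the_inv_into_into[OF inj] by blast
  have jinj: "inj_on j W" unfolding W_def j_def using inj_on_the_inv_into[OF inj] .
  have AW_iff: "AW x y \<longleftrightarrow> x \<in> W \<and> y \<in> W \<and> NA (j x) (j y)" for x y
    unfolding AW_def W_def using ji NAV by (metis imageI f_the_inv_into_f[OF inj] j_def W_def)
  have psi_i: "a \<in> NV \<Longrightarrow> \<psi> g (\<iota> a) = \<iota> (nphi g a)" for g a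
    unfolding \<psi>_def W_def using ji by simp
  have AW_NA: "NA a b \<Longrightarrow> AW (\<iota> a) (\<iota> b)" for a b unfolding AW_def by blast
  have AW_j: "AW x y \<Longrightarrow> NA (j x) (j y)" for x y using AW_iff by blast
  have AW_W: "AW x y \<Longrightarrow> x \<in> W \<and> y \<in> W" for x y using AW_iff by blast
  have pst: "S \<subseteq> W \<Longrightarrow> pstab G \<psi> S = pstab G nphi (j ` S)" for S
  proof -
    assume S: "S \<subseteq> W"
    have "g \<in> carrier G \<Longrightarrow> x \<in> S \<Longrightarrow> \<psi> g x = x \<longleftrightarrow> nphi g (j x) = j x" for g x
    proof -
      assume g: "g \<in> carrier G" and x: "x \<in> S"
      have xW: "x \<in> W" using S x by blast
      have "\<psi> g x = \<iota> (nphi g (j x))" unfolding \<psi>_def using xW by simp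
      moreover have "x = \<iota> (j x)" using ij xW by simp
      ultimately have "\<psi> g x = x \<longleftrightarrow> \<iota> (nphi g (j x)) = \<iota> (j x)" by simp
      also have "\<dots> \<longleftrightarrow> nphi g (j x) = j x"
        using inj_on_eq_iff[OF inj nphiV[OF g jV[OF xW]] jV[OF xW]] .
      finally show ?thesis .
    qed
    then show ?thesis unfolding pstab_def by auto
  qed
  have walkW: "wk AW xs \<Longrightarrow> 2 \<le> length xs \<Longrightarrow> set xs \<subseteq> W" for xs
    using wk_set[of AW xs "\<lambda>x. x \<in> W"] AW_W by blast
  have tW: "is_tree W AW"
    unfolding is_tree_def
  proof (intro conjI)
    show "simple_graph W AW" unfolding simple_graph_def
    proof (intro allI impI conjI)
      fix x y assume a: "AW x y"
      show "x \<in> W" "y \<in> W" using AW_W[OF a] by auto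
      show "x \<noteq> y" using a sg unfolding simple_graph_def AW_iff by blast
      show "AW y x" using a sg unfolding simple_graph_def AW_iff by blast
    qed
    show "W \<noteq> {}" using tr unfolding is_tree_def W_def by blast
    show "graph_connected W AW" unfolding graph_connected_def
    proof (intro ballI)
      fix x y assume x: "x \<in> W" and y: "y \<in> W"
      obtain xs where xs: "gwalk NA xs" "hd xs = j x" "last xs = j y"
        using tr jV[OF x] jV[OF y] unfolding is_tree_def graph_connected_def by blast
      have "wk AW (map \<iota> xs)" using wk_map[of NA xs AW \<iota>] AW_NA xs(1) gwalk_wk by blast
      moreover have "xs \<noteq> []" using xs(1) unfolding gwalk_def by blast
      ultimately show "\<exists>xs. gwalk AW xs \<and> hd xs = x \<and> last xs = y"
        using xs ij x y by (intro exI[of _ "map \<iota> xs"]) (simp add: hd_map last_map gwalk_wk)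
    qed
    show "\<not> (\<exists>c. cycle_list AW c)"
    proof
      assume "\<exists>c. cycle_list AW c"
      then obtain c where c: "cycle_list AW c" by blast
      have wc: "wk AW c" using c unfolding cycle_list_def gwalk_wk by blast
      have cW: "set c \<subseteq> W" using walkW[OF wc] c unfolding cycle_list_def by simp
      have ne: "c \<noteq> []" using c unfolding cycle_list_def by auto
      have "cycle_list NA (map j c)" unfolding cycle_list_def
      proof (intro conjI)
        show "3 \<le> length (map j c)" using c unfolding cycle_list_def by simp
        show "distinct (map j c)" using c cW jinj unfolding cycle_list_def
          by (simp add: distinct_map inj_on_subset)
        show "gwalk NA (map j c)" unfolding gwalk_wk using wk_map[OF wc] AW_j by blast
        show "NA (last (map j c)) (hd (map j c))"
          using c ne AW_j unfolding cycle_list_def by (simp add: hd_map last_map)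
      qed
      then show False using tr unfolding is_tree_def by blast
    qed
  qed
  have gaW: "group_action G W \<psi>"
  proof (rule group_actionI[OF grpG])
    show "\<psi> g \<in> extensional W" for g unfolding \<psi>_def extensional_def by simp
    show "\<psi> g x \<in> W" if "g \<in> carrier G" "x \<in> W" for g x
      unfolding \<psi>_def W_def using that nphiV jV W_def by auto
    show "\<psi> \<one> x = x" if "x \<in> W" for x
    proof -
      have "nphi \<one> (j x) = j x"
        using group_action.id_eq_one[OF ga] jV[OF that] by (metis restrict_apply')
      then show ?thesis unfolding \<psi>_def using that ij by simp
    qed
    show "\<psi> (g \<otimes> h) x = \<psi> g (\<psi> h x)" if "g \<in> carrier G" "h \<in> carrier G" "x \<in> W" for g h x
    proof -
      have hx: "nphi h (j x) \<in> NV" using nphiV that jV by blast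
      have "\<psi> h x = \<iota> (nphi h (j x))" unfolding \<psi>_def using that by simp
      then have "\<psi> g (\<psi> h x) = \<iota> (nphi g (nphi h (j x)))" using psi_i[OF hx] by simp
      moreover have "nphi (g \<otimes> h) (j x) = nphi g (nphi h (j x))"
        using group_action.composition_rule[OF ga jV[OF that(3)] that(1,2)] .
      ultimately show ?thesis unfolding \<psi>_def using that by simp
    qed
  qed
  have gacW: "graph_action G W AW \<psi>"
    unfolding graph_action_def
  proof (intro conjI gaW ballI allI impI)
    fix g x y assume g: "g \<in> carrier G" and a: "AW x y"
    obtain p q where pq: "NA p q" "x = \<iota> p" "y = \<iota> q" using a unfolding AW_def by blast
    have "\<psi> g x = \<iota> (nphi g p)" "\<psi> g y = \<iota> (nphi g q)" using psi_i NAV pq by auto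
    then show "AW (\<psi> g x) (\<psi> g y)" using AW_NA nphiA[OF g pq(1)] by simp
  qed
  have niW: "without_inversions G AW \<psi>"
    unfolding without_inversions_def
  proof (intro ballI allI impI notI)
    fix g x y assume g: "g \<in> carrier G" and a: "AW x y" and sw: "\<psi> g x = y \<and> \<psi> g y = x"
    obtain p q where pq: "NA p q" "x = \<iota> p" "y = \<iota> q" using a unfolding AW_def by blast
    have pV: "p \<in> NV" "q \<in> NV" using NAV pq by auto
    have "\<iota> (nphi g p) = \<iota> q" "\<iota> (nphi g q) = \<iota> p" using sw pq psi_i pV by auto
    then have "nphi g p = q" "nphi g q = p" using inj nphiV[OF g] pV by (meson inj_on_eq_iff)+
    then show False using ni g pq(1) unfolding without_inversions_def by blast
  qed
  have feoW: "finitely_many_edge_orbits G AW \<psi>"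
  proof -
    obtain FN where fin: "finite FN" and FV: "\<forall>p\<in>FN. fst p \<in> NV \<and> snd p \<in> NV"
      and cov: "\<forall>x y. NA x y \<longrightarrow> (\<exists>p\<in>FN. \<exists>g\<in>carrier G. nphi g (fst p) = x \<and> nphi g (snd p) = y)"
      using feo by blast
    define FW where "FW = (\<lambda>p. (\<iota> (fst p), \<iota> (snd p))) ` FN"
    have "finite FW" unfolding FW_def using fin by simp
    moreover have "\<exists>(a, b)\<in>FW. \<exists>g\<in>carrier G. \<psi> g a = u \<and> \<psi> g b = v" if a: "AW u v" for u v
    proof -
      obtain p q where pq: "NA p q" "u = \<iota> p" "v = \<iota> q" using a unfolding AW_def by blast
      obtain r g where r: "r \<in> FN" and g: "g \<in> carrier G" and gr: "nphi g (fst r) = p" "nphi g (snd r) = q"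
        using cov pq(1) by blast
      have "\<psi> g (\<iota> (fst r)) = u" "\<psi> g (\<iota> (snd r)) = v" using psi_i FV r gr pq by auto
      moreover have "(\<iota> (fst r), \<iota> (snd r)) \<in> FW" unfolding FW_def using r by blast
      ultimately show ?thesis using g by blast
    qed
    ultimately show ?thesis unfolding finitely_many_edge_orbits_def by blast
  qed
  have ntW: "nontrivial_action G W \<psi>"
    unfolding nontrivial_action_def
  proof
    assume "\<exists>x\<in>W. \<forall>g\<in>carrier G. \<psi> g x = x"
    then obtain x where x: "x \<in> W" and fx: "\<forall>g\<in>carrier G. \<psi> g x = x" by blast
    have "\<forall>g\<in>carrier G. g \<in> pstab G \<psi> {x}" using fx unfolding pstab_def by auto
    then have "\<forall>g\<in>carrier G. g \<in> pstab G nphi {j x}" using pst[of "{x}"] x by auto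
    then show False using nt jV[OF x] unfolding nontrivial_action_def pstab_def by blast
  qed
  have opW: "over_parabolic G PP AW \<psi>"
    unfolding over_parabolic_def
  proof (intro allI impI)
    fix x y assume a: "AW x y"
    have "pstab G \<psi> {x, y} = pstab G nphi {j x, j y}" using pst[of "{x, y}"] AW_W[OF a] by simp
    then show "parabolic G PP (pstab G \<psi> {x, y})"
      using op AW_j[OF a] unfolding over_parabolic_def by simp
  qed
  have acW: "acylindrical G AW \<psi> 2 C"
    unfolding acylindrical_def
  proof (intro allI impI)
    fix xs assume a: "gwalk AW xs \<and> distinct xs \<and> 2 + 2 \<le> length xs"
    have w: "wk AW xs" using a gwalk_wk by blast
    have xW: "set xs \<subseteq> W" using walkW[OF w] a by simp
    have "gwalk NA (map j xs)" unfolding gwalk_wk using wk_map[OF w] AW_j by blast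
    moreover have "distinct (map j xs)" using a xW jinj by (simp add: distinct_map inj_on_subset)
    moreover have "2 + 2 \<le> length (map j xs)" using a by simp
    ultimately have "finite (pstab G nphi (set (map j xs))) \<and> card (pstab G nphi (set (map j xs))) \<le> C"
      using ac unfolding acylindrical_def by blast
    moreover have "pstab G \<psi> (set xs) = pstab G nphi (set (map j xs))" using pst[OF xW] by simp
    ultimately show "finite (pstab G \<psi> (set xs)) \<and> card (pstab G \<psi> (set xs)) \<le> C" by simp
  qed
  have "splitting G W AW \<psi>" unfolding splitting_def using tW gacW niW feoW by blast
  then show ?thesis using ntW opW acW by blast
qed


definition cyl_code :: "nat set set \<Rightarrow> nat" where
  "cyl_code Y = (LEAST n. \<exists>u v. {u, v} \<in> Y \<and> n = prod_encode (u, v))"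

definition enc :: "nat + nat set set \<Rightarrow> nat" where
  "enc x = (case x of Inl v \<Rightarrow> 2 * v | Inr Y \<Rightarrow> 2 * cyl_code Y + 1)"

lemma cyl_code_ex:
  assumes "{a, b} \<in> Y"
  shows "\<exists>u v. {u, v} \<in> Y \<and> cyl_code Y = prod_encode (u, v)"
proof -
  have "\<exists>n. \<exists>u v. {u, v} \<in> Y \<and> n = prod_encode (u, v)" using assms by blast
  then show ?thesis unfolding cyl_code_def by (rule LeastI_ex)
qed

lemma (in cylsetup) enc_inj: "inj_on enc NV"
proof (rule inj_onI)
  have cex: "\<exists>u v. {u, v} \<in> Y \<and> cyl_code Y = prod_encode (u, v)" if Y: "Y \<in> Cyls" for Y
  proof -
    obtain e where e: "e \<in> Y" using Cyls_ne Y by blast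
    then obtain a b where "Adj a b" "e = {a, b}" using Cyls_Ed Y Ed_iff by blast
    then show ?thesis using cyl_code_ex e by blast
  qed
  fix x y assume x: "x \<in> NV" and y: "y \<in> NV" and eq: "enc x = enc y"
  show "x = y"
  proof (cases x)
    case (Inl v)
    show ?thesis
    proof (cases y)
      case (Inl w) then show ?thesis using eq \<open>x = Inl v\<close> unfolding enc_def by simp
    next
      case (Inr Z)
      then have "2 * v = 2 * cyl_code Z + 1" using eq \<open>x = Inl v\<close> unfolding enc_def by simp
      then have False by presburger
      then show ?thesis by blast
    qed
  next
    case (Inr Y)
    show ?thesis
    proof (cases y)
      case (Inl w)
      then have "2 * cyl_code Y + 1 = 2 * w" using eq \<open>x = Inr Y\<close> unfolding enc_def by simp
      then have False by presburger
      then show ?thesis by blast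
    next
      case (Inr Z)
      have Y: "Y \<in> Cyls" using x \<open>x = Inr Y\<close> unfolding NV_def by auto
      have Z: "Z \<in> Cyls" using y Inr unfolding NV_def by auto
      have "cyl_code Y = cyl_code Z" using eq \<open>x = Inr Y\<close> Inr unfolding enc_def by simp
      moreover obtain u v where uv: "{u, v} \<in> Y" "cyl_code Y = prod_encode (u, v)" using cex[OF Y] by blast
      moreover obtain u' v' where uv': "{u', v'} \<in> Z" "cyl_code Z = prod_encode (u', v')" using cex[OF Z] by blast
      ultimately have "(u, v) = (u', v')" by simp
      then have "{u, v} \<in> Z" using uv' by simp
      then have "Y = Z" using Cyls_disj[OF Y Z uv(1)] by blast
      then show ?thesis using \<open>x = Inr Y\<close> Inr by simp
    qed
  qed
qed


lemma rel_hyp_inf: "rel_hyp G PP \<Longrightarrow> P \<in> PP \<Longrightarrow> infinite P"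
proof -
  assume r: "rel_hyp G PP" and P: "P \<in> PP"
  from r obtain V0 :: "nat set" and Adj0 \<phi>0 where h: "\<forall>P\<in>PP. \<exists>v\<in>V0. P = pstab G \<phi>0 {v} \<and> infinite P"
    unfolding rel_hyp_def by (elim conjE exE) (rule that, assumption)
  then show ?thesis using P by blast
qed

theorem lemma3p6:
  fixes G :: "('g, 'b) monoid_scheme" and \<P> :: "'g set set" and C :: nat
  assumes "rel_hyp G \<P>"
    and "almost_malnormal G \<P> C"
    and "\<forall>P\<in>\<P>. slender_subgroup G P"
    and "\<exists>V Adj \<phi>. splitting G V Adj \<phi> \<and> nontrivial_action G V \<phi> \<and> over_parabolic G \<P> Adj \<phi>"
  shows "\<exists>V Adj \<phi>. splitting G V Adj \<phi> \<and> nontrivial_action G V \<phi> \<and> over_parabolic G \<P> Adj \<phi> \<and>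
           acylindrical G Adj \<phi> 2 C"
proof -
  obtain V Adj \<phi> where s: "splitting G V Adj \<phi>" "nontrivial_action G V \<phi>" "over_parabolic G \<P> Adj \<phi>"
    using assms(4) by blast
  note r = assms(1)[unfolded rel_hyp_def]
  have grp: "group G" using r by (rule conjunct1)
  have r4: "\<forall>P\<in>\<P>. subgroup P G \<and> fin_gen (G\<lparr>carrier := P\<rparr>) \<and> P \<noteq> carrier G"
    using r by (elim conjE)
  have sg: "\<And>P. P \<in> \<P> \<Longrightarrow> subgroup P G" using r4 by blast
  have ne: "\<And>P. P \<in> \<P> \<Longrightarrow> P \<noteq> carrier G" using r4 by blast
  have inf: "\<And>P. P \<in> \<P> \<Longrightarrow> infinite P" using rel_hyp_inf[OF assms(1)] by blast
  interpret cylsetup G \<P> C V Adj \<phi>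
    by (rule cylsetup.intro[OF grp sg inf ne assms(2) s])
  show ?thesis
    using transport[OF enc_inj new_tree new_graph_action new_noinv new_feo new_nontrivial
        new_over_parabolic new_acyl] .
qed


end
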